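(* Let $\square$ be one of $\boxplus$, $\Delta_1[\tau]^*$, $\Delta_1[\tau,\gamma_-]^*$, $\Delta_1[\tau,\gamma_+]^*$, $\Delta_1[\tau,\gamma_+,\gamma_-]^*$, $\Delta_1[\tau,\gamma_-,\gamma_+,\mathrm{diag}]^*$. Then: (a) for every $\square$-morphism $\phi:[1]^m\to[1]^n$ and every $k\geq0$, there is a unique morphism of cubical sets $\square[\phi^{[k]}]:\square[([1]^m)^{[k]}]\to\square[([1]^n)^{[k]}]$ with $\iota\circ\square[\phi^{[k]}]=\mathrm{ner}_\square(\phi^{[k]})\circ\iota$, where $\iota$ denotes the inclusions $\square[P]\hookrightarrow\mathrm{ner}_\square P$; (b) for every $n$ and every injective monotone $\delta:[k_1]\to[k_2]$, there is a unique morphism of cubical sets $\square[([1]^n)^{\delta}]:\square[([1]^n)^{[k_2]}]\to\square[([1]^n)^{[k_1]}]$ with $\iota\circ\square[([1]^n)^{\delta}]=\mathrm{ner}_\square(([1]^n)^{\delta})\circ\iota$.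
   Context: $[k]=\{0<1<\cdots<k\}$; $[1]^n$ the product poset ($[1]^0=[0]$). $\tau(x,y)=(y,x)$, $\gamma_-(x,y)=\min(x,y)$, $\gamma_+(x,y)=\max(x,y)$, $\mathrm{diag}(x)=(x,x)$. For functions $\phi_1,\dots,\phi_j$, $\Delta_1[\phi_1,\dots,\phi_j]^*$ is the smallest subcategory of $\mathbf{Set}$ containing all functions between $[0]$ and $[1]$ and $\phi_1,\dots,\phi_j$, closed under Cartesian products of functions; its objects are the $[1]^n$. $\boxplus$ has objects $[1]^n$ and morphisms the monotone functions mapping intervals (non-empty $[x,z]=\{y:x\leq y\leq z\}$) onto intervals. For a poset $Q$, $Q^{[k]}$ is the poset of monotone maps $[k]\to Q$ with pointwise order; $\phi^{[k]}$ is postcomposition with $\phi$ and $Q^{\delta}$ is precomposition with $\delta$. A cubical set is a presheaf $\square^{op}\to\mathbf{Set}$. For a poset $P$, $\mathrm{ner}_\square P$ is the cubical set $[1]^n\mapsto\mathbf{Pos}([1]^n,P)$, and $\square[P]\subseteq\mathrm{ner}_\square P$ is the subpresheaf of monotone $\theta:[1]^n\to P$ whose image lies in a Boolean interval $I$ of $P$ (an interval which is a Boolean lattice) such that the corestriction $[1]^n\to I$, after composing with some poset isomorphism $I\cong[1]^k$, is a $\square$-morphism. *)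

theory Defs
  imports "HOL-Library.FuncSet"
begin

text \<open>An element of [1]^n is a boolean list of length n (False = 0, True = 1);
  [1]^0 = [0] is the singleton containing the empty list.  The order is the
  componentwise (product) order.  [1]^m x [1]^n is identified with [1]^(m+n)
  by list concatenation.\<close>

definition cube :: "nat \<Rightarrow> bool list set" where
  "cube n = {xs. length xs = n}"

definition cube_le :: "bool list \<Rightarrow> bool list \<Rightarrow> bool" where
  "cube_le xs ys \<longleftrightarrow> list_all2 (\<le>) xs ys"

definition mono_betw :: "'a set \<Rightarrow> ('a \<Rightarrow> 'a \<Rightarrow> bool) \<Rightarrow> ('b \<Rightarrow> 'b \<Rightarrow> bool) \<Rightarrow> ('a \<Rightarrow> 'b) \<Rightarrow> bool" where
  "mono_betw A leA leB f \<longleftrightarrow> (\<forall>x\<in>A. \<forall>y\<in>A. leA x y \<longrightarrow> leB (f x) (f y))"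

definition cube_interval :: "nat \<Rightarrow> bool list \<Rightarrow> bool list \<Rightarrow> bool list set" where
  "cube_interval n x z = {y \<in> cube n. cube_le x y \<and> cube_le y z}"

definition tau :: "bool list \<Rightarrow> bool list" where
  "tau xs = [xs ! 1, xs ! 0]"

definition gamma_minus :: "bool list \<Rightarrow> bool list" where
  "gamma_minus xs = [min (xs ! 0) (xs ! 1)]"

definition gamma_plus :: "bool list \<Rightarrow> bool list" where
  "gamma_plus xs = [max (xs ! 0) (xs ! 1)]"

definition diag :: "bool list \<Rightarrow> bool list" where
  "diag xs = [xs ! 0, xs ! 0]"

text \<open>dmor G m n f: f is a morphism [1]^m \<rightarrow> [1]^n of the smallest subcategory
  of Set containing all (monotone) functions between [0] and [1] and the
  generators in G, closed under Cartesian products of functions.  Morphisms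
  are considered as functions on the domain cube m (rule dm_ext).\<close>

inductive dmor :: "(nat \<times> nat \<times> (bool list \<Rightarrow> bool list)) set \<Rightarrow> nat \<Rightarrow> nat \<Rightarrow> (bool list \<Rightarrow> bool list) \<Rightarrow> bool"
  for G where
  dm_base: "a \<le> 1 \<Longrightarrow> b \<le> 1 \<Longrightarrow> f \<in> cube a \<rightarrow> cube b \<Longrightarrow> mono_betw (cube a) cube_le cube_le f
     \<Longrightarrow> dmor G a b f"
| dm_gen: "(a, b, f) \<in> G \<Longrightarrow> dmor G a b f"
| dm_comp: "dmor G a b f \<Longrightarrow> dmor G b c g \<Longrightarrow> dmor G a c (g \<circ> f)"
| dm_prod: "dmor G a b f \<Longrightarrow> dmor G c d g
     \<Longrightarrow> dmor G (a + c) (b + d) (\<lambda>xs. f (take a xs) @ g (drop a xs))"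
| dm_ext: "dmor G a b f \<Longrightarrow> (\<forall>x\<in>cube a. g x = f x) \<Longrightarrow> dmor G a b g"

definition boxplus_mor :: "nat \<Rightarrow> nat \<Rightarrow> (bool list \<Rightarrow> bool list) \<Rightarrow> bool" where
  "boxplus_mor m n f \<longleftrightarrow>
     f \<in> cube m \<rightarrow> cube n \<and> mono_betw (cube m) cube_le cube_le f \<and>
     (\<forall>x\<in>cube m. \<forall>z\<in>cube m. cube_le x z \<longrightarrow>
        (\<exists>u\<in>cube n. \<exists>v\<in>cube n. cube_le u v \<and> f ` cube_interval m x z = cube_interval n u v))"

datatype sqcat = Boxplus | D_tau | D_tau_gm | D_tau_gp | D_tau_gp_gm | D_tau_gm_gp_diag

definition gens :: "sqcat \<Rightarrow> (nat \<times> nat \<times> (bool list \<Rightarrow> bool list)) set" where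
  "gens C = (case C of
      Boxplus \<Rightarrow> {}
    | D_tau \<Rightarrow> {(2, 2, tau)}
    | D_tau_gm \<Rightarrow> {(2, 2, tau), (2, 1, gamma_minus)}
    | D_tau_gp \<Rightarrow> {(2, 2, tau), (2, 1, gamma_plus)}
    | D_tau_gp_gm \<Rightarrow> {(2, 2, tau), (2, 1, gamma_plus), (2, 1, gamma_minus)}
    | D_tau_gm_gp_diag \<Rightarrow> {(2, 2, tau), (2, 1, gamma_minus), (2, 1, gamma_plus), (1, 2, diag)})"

definition sq_mor :: "sqcat \<Rightarrow> nat \<Rightarrow> nat \<Rightarrow> (bool list \<Rightarrow> bool list) \<Rightarrow> bool" where
  "sq_mor C m n f = (if C = Boxplus then boxplus_mor m n f else dmor (gens C) m n f)"

text \<open>A poset is given by a carrier set and an order relation.  Q^[k] is the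
  set of monotone maps [k] = {0..k} \<rightarrow> Q (extensional functions), with the
  pointwise order.\<close>

definition chains :: "nat \<Rightarrow> 'a set \<Rightarrow> ('a \<Rightarrow> 'a \<Rightarrow> bool) \<Rightarrow> (nat \<Rightarrow> 'a) set" where
  "chains k Q le = {c \<in> {..k} \<rightarrow>\<^sub>E Q. \<forall>i j. i \<le> j \<and> j \<le> k \<longrightarrow> le (c i) (c j)}"

definition chain_le :: "nat \<Rightarrow> ('a \<Rightarrow> 'a \<Rightarrow> bool) \<Rightarrow> (nat \<Rightarrow> 'a) \<Rightarrow> (nat \<Rightarrow> 'a) \<Rightarrow> bool" where
  "chain_le k le c d \<longleftrightarrow> (\<forall>i\<le>k. le (c i) (d i))"

text \<open>phi^[k]: postcomposition;  Q^delta: precomposition.\<close>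

definition post_map :: "nat \<Rightarrow> ('a \<Rightarrow> 'b) \<Rightarrow> (nat \<Rightarrow> 'a) \<Rightarrow> (nat \<Rightarrow> 'b)" where
  "post_map k f c = restrict (f \<circ> c) {..k}"

definition pre_map :: "nat \<Rightarrow> (nat \<Rightarrow> nat) \<Rightarrow> (nat \<Rightarrow> 'a) \<Rightarrow> (nat \<Rightarrow> 'a)" where
  "pre_map k1 \<delta> c = restrict (c \<circ> \<delta>) {..k1}"

definition ner :: "'a set \<Rightarrow> ('a \<Rightarrow> 'a \<Rightarrow> bool) \<Rightarrow> nat \<Rightarrow> (bool list \<Rightarrow> 'a) set" where
  "ner P le n = {\<theta> \<in> cube n \<rightarrow>\<^sub>E P. mono_betw (cube n) cube_le le \<theta>}"

definition interval :: "'a set \<Rightarrow> ('a \<Rightarrow> 'a \<Rightarrow> bool) \<Rightarrow> 'a \<Rightarrow> 'a \<Rightarrow> 'a set" where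
  "interval P le x z = {y \<in> P. le x y \<and> le y z}"

text \<open>Boolean interval: a (nonempty) interval of P that is order-isomorphic to
  some [1]^k; the theta of sq_set must be a box-morphism into it after
  composing with some such isomorphism.\<close>

definition sq_set :: "sqcat \<Rightarrow> 'a set \<Rightarrow> ('a \<Rightarrow> 'a \<Rightarrow> bool) \<Rightarrow> nat \<Rightarrow> (bool list \<Rightarrow> 'a) set" where
  "sq_set C P le n = {\<theta> \<in> ner P le n.
     \<exists>x\<in>P. \<exists>z\<in>P. \<exists>k. \<exists>\<iota> :: 'a \<Rightarrow> bool list.
        le x z \<and>
        bij_betw \<iota> (interval P le x z) (cube k) \<and>
        (\<forall>a\<in>interval P le x z. \<forall>b\<in>interval P le x z. le a b \<longleftrightarrow> cube_le (\<iota> a) (\<iota> b)) \<and>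
        \<theta> ` cube n \<subseteq> interval P le x z \<and>
        sq_mor C n k (\<iota> \<circ> \<theta>)}"

text \<open>The presheaf action of a box-morphism psi : [1]^a \<rightarrow> [1]^b on X b is
  precomposition with psi.\<close>

definition cset_mor :: "sqcat \<Rightarrow> (nat \<Rightarrow> (bool list \<Rightarrow> 'a) set) \<Rightarrow> (nat \<Rightarrow> (bool list \<Rightarrow> 'b) set)
    \<Rightarrow> (nat \<Rightarrow> (bool list \<Rightarrow> 'a) \<Rightarrow> (bool list \<Rightarrow> 'b)) \<Rightarrow> bool" where
  "cset_mor C X Y F \<longleftrightarrow>
     (\<forall>n. \<forall>\<theta>\<in>X n. F n \<theta> \<in> Y n) \<and>
     (\<forall>a b \<psi>. sq_mor C a b \<psi> \<longrightarrow>
        (\<forall>\<theta>\<in>X b. F a (restrict (\<theta> \<circ> \<psi>) (cube a)) = restrict (F b \<theta> \<circ> \<psi>) (cube a)))"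

text \<open>iota \<circ> F = ner(f) \<circ> iota, where ner(f) is postcomposition with f.\<close>

definition commutes_with_ner :: "(nat \<Rightarrow> (bool list \<Rightarrow> 'a) set) \<Rightarrow> ('a \<Rightarrow> 'b)
    \<Rightarrow> (nat \<Rightarrow> (bool list \<Rightarrow> 'a) \<Rightarrow> (bool list \<Rightarrow> 'b)) \<Rightarrow> bool" where
  "commutes_with_ner X f F \<longleftrightarrow> (\<forall>n. \<forall>\<theta>\<in>X n. F n \<theta> = restrict (f \<circ> \<theta>) (cube n))"

definition unique_lift :: "sqcat \<Rightarrow> 'a set \<Rightarrow> ('a \<Rightarrow> 'a \<Rightarrow> bool) \<Rightarrow> 'b set \<Rightarrow> ('b \<Rightarrow> 'b \<Rightarrow> bool)
    \<Rightarrow> ('a \<Rightarrow> 'b) \<Rightarrow> bool" where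
  "unique_lift C P leP Q leQ f \<longleftrightarrow>
     (\<exists>F. cset_mor C (sq_set C P leP) (sq_set C Q leQ) F \<and> commutes_with_ner (sq_set C P leP) f F) \<and>
     (\<forall>F G. cset_mor C (sq_set C P leP) (sq_set C Q leQ) F \<and> commutes_with_ner (sq_set C P leP) f F \<and>
            cset_mor C (sq_set C P leP) (sq_set C Q leQ) G \<and> commutes_with_ner (sq_set C P leP) f G
        \<longrightarrow> (\<forall>n. \<forall>\<theta>\<in>sq_set C P leP n. F n \<theta> = G n \<theta>))"

end

theory Submission
  imports Defs "HOL-Combinatorics.Permutations"
begin


lemma cube_le_Nil[simp]: "cube_le [] ys \<longleftrightarrow> ys = []" "cube_le xs [] \<longleftrightarrow> xs = []"
  by (auto simp: cube_le_def)

lemma cube_le_Cons[simp]: "cube_le (x#xs) (y#ys) \<longleftrightarrow> (x \<longrightarrow> y) \<and> cube_le xs ys"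
  by (auto simp: cube_le_def)

lemma cube_le_length: "cube_le xs ys \<Longrightarrow> length xs = length ys"
  by (auto simp: cube_le_def list_all2_lengthD)

lemma cube_le_nth: "cube_le xs ys \<longleftrightarrow> length xs = length ys \<and> (\<forall>j<length xs. xs!j \<longrightarrow> ys!j)"
  by (auto simp: cube_le_def list_all2_conv_all_nth le_bool_def)

lemma cube_le_refl[simp]: "cube_le xs xs"
  by (simp add: cube_le_nth)

lemma cube_le_trans: "cube_le xs ys \<Longrightarrow> cube_le ys zs \<Longrightarrow> cube_le xs zs"
  by (auto simp: cube_le_nth)

lemma cube_le_antisym: "cube_le xs ys \<Longrightarrow> cube_le ys xs \<Longrightarrow> xs = ys"
  by (auto simp: cube_le_nth intro: nth_equalityI)

lemma cube_le_append: "length a1 = length b1 \<Longrightarrow>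
   cube_le (a1 @ a2) (b1 @ b2) \<longleftrightarrow> cube_le a1 b1 \<and> cube_le a2 b2"
  by (auto simp: cube_le_def list_all2_append)

lemma cube_le_take: "cube_le xs ys \<Longrightarrow> cube_le (take n xs) (take n ys)"
  by (auto simp: cube_le_def list_all2_takeI)

lemma cube_le_drop: "cube_le xs ys \<Longrightarrow> cube_le (drop n xs) (drop n ys)"
  by (auto simp: cube_le_def list_all2_dropI)

lemma in_cube[simp]: "xs \<in> cube n \<longleftrightarrow> length xs = n"
  by (simp add: cube_def)

fun rd :: "bool list \<Rightarrow> bool list \<Rightarrow> bool list \<Rightarrow> bool list" where
  "rd (a#as) (b#bs) (y#ys) = (if a = b then rd as bs ys else y # rd as bs ys)"
| "rd _ _ _ = []"

fun fill :: "bool list \<Rightarrow> bool list \<Rightarrow> bool list \<Rightarrow> bool list" where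
  "fill (a#as) (b#bs) v = (if a = b then a # fill as bs v else hd v # fill as bs (tl v))"
| "fill _ _ _ = []"

fun nd :: "bool list \<Rightarrow> bool list \<Rightarrow> nat" where
  "nd (a#as) (b#bs) = (if a = b then nd as bs else Suc (nd as bs))"
| "nd _ _ = 0"

lemma nd_le: "nd a b \<le> length a"
  by (induction a b rule: nd.induct) auto

lemma length_rd: "length a = length b \<Longrightarrow> length y = length a \<Longrightarrow> length (rd a b y) = nd a b"
  by (induction a b y rule: rd.induct) auto

lemma length_fill: "length a = length b \<Longrightarrow> length (fill a b v) = length a"
  by (induction a b v rule: fill.induct) auto

lemma rd_fill: "length a = length b \<Longrightarrow> length v = nd a b \<Longrightarrow> rd a b (fill a b v) = v"
  by (induction a b v rule: fill.induct) (auto simp: length_Suc_conv)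

lemma fill_rd: "cube_le a y \<Longrightarrow> cube_le y b \<Longrightarrow> fill a b (rd a b y) = y"
  by (induction a b y rule: rd.induct) auto

lemma fill_between: "cube_le a b \<Longrightarrow> cube_le a (fill a b v) \<and> cube_le (fill a b v) b"
proof (induction a b v rule: fill.induct)
  case (1 a as b bs v)
  then show ?case by (cases a; cases b; auto)
qed auto

lemma rd_mono: "cube_le y y' \<Longrightarrow> cube_le (rd a b y) (rd a b y')"
proof (induction a b y arbitrary: y' rule: rd.induct)
  case (1 a as b bs y ys)
  then show ?case by (cases y'; auto)
qed auto

lemma fill_mono: "length a = length b \<Longrightarrow> cube_le v w \<Longrightarrow> cube_le (fill a b v) (fill a b w)"
proof (induction a b v arbitrary: w rule: fill.induct)
  case (1 a as b bs v)
  then show ?case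
    by (cases v; cases w; auto)
qed auto

lemma fill_mono_iff: "length a = length b \<Longrightarrow> length v = nd a b \<Longrightarrow> length w = nd a b \<Longrightarrow>
    cube_le (fill a b v) (fill a b w) \<longleftrightarrow> cube_le v w"
  by (metis fill_mono rd_fill rd_mono)

lemma nd_append: "length a1 = length b1 \<Longrightarrow> nd (a1@a2) (b1@b2) = nd a1 b1 + nd a2 b2"
  by (induction a1 b1 rule: nd.induct) auto

lemma rd_append: "length a1 = length b1 \<Longrightarrow> length y1 = length a1 \<Longrightarrow>
   rd (a1@a2) (b1@b2) (y1@y2) = rd a1 b1 y1 @ rd a2 b2 y2"
  by (induction a1 b1 y1 rule: rd.induct) auto

lemma fill_append: "length a1 = length b1 \<Longrightarrow>
   fill (a1@a2) (b1@b2) v = fill a1 b1 (take (nd a1 b1) v) @ fill a2 b2 (drop (nd a1 b1) v)"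
proof (induction a1 b1 v rule: fill.induct)
  case (1 a as b bs v)
  then show ?case by (cases v) (auto simp: drop_Suc)
qed auto



lemma cube2: "length xs = 2 \<Longrightarrow> \<exists>p q. xs = [p,q]"
  by (auto simp: length_Suc_conv numeral_2_eq_2)

lemma cube2': "length xs = Suc (Suc 0) \<Longrightarrow> \<exists>p q. xs = [p,q]"
  by (auto simp: length_Suc_conv)

lemma cube1: "length xs = Suc 0 \<Longrightarrow> \<exists>p. xs = [p]"
  by (auto simp: length_Suc_conv)

definition cmap :: "nat \<Rightarrow> nat \<Rightarrow> (bool list \<Rightarrow> bool list) \<Rightarrow> bool" where
  "cmap a b f \<longleftrightarrow> f \<in> cube a \<rightarrow> cube b \<and> mono_betw (cube a) cube_le cube_le f"

lemma cmapD: "cmap a b f \<Longrightarrow> length x = a \<Longrightarrow> length (f x) = b"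
  "cmap a b f \<Longrightarrow> length x = a \<Longrightarrow> length y = a \<Longrightarrow> cube_le x y \<Longrightarrow> cube_le (f x) (f y)"
  by (auto simp: cmap_def mono_betw_def Pi_def)

lemma cmapI: "(\<And>x. length x = a \<Longrightarrow> length (f x) = b) \<Longrightarrow>
   (\<And>x y. length x = a \<Longrightarrow> length y = a \<Longrightarrow> cube_le x y \<Longrightarrow> cube_le (f x) (f y)) \<Longrightarrow> cmap a b f"
  by (auto simp: cmap_def mono_betw_def Pi_def)

lemma cmap_prod: "cmap a b f \<Longrightarrow> cmap c d g \<Longrightarrow> cmap (a+c) (b+d) (\<lambda>xs. f (take a xs) @ g (drop a xs))"
  apply (rule cmapI)
   apply (simp add: cmapD)
  apply (subst cube_le_append)
   apply (simp add: cmapD)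
  apply (simp add: cmapD cube_le_take cube_le_drop)
  done

lemma cmap_comp: "cmap a b f \<Longrightarrow> cmap b c g \<Longrightarrow> cmap a c (g \<circ> f)"
  by (rule cmapI) (auto simp: cmapD)

lemma cmap_ext: "cmap a b f \<Longrightarrow> (\<forall>x\<in>cube a. g x = f x) \<Longrightarrow> cmap a b g"
  by (rule cmapI) (auto simp: cmapD)

lemma cmap_tau: "cmap 2 2 tau"
  by (rule cmapI) (auto simp: tau_def dest!: cube2 cube2')

lemma cmap_gm: "cmap 2 (Suc 0) gamma_minus"
  by (rule cmapI) (auto simp: gamma_minus_def dest!: cube2 cube2')

lemma cmap_gp: "cmap 2 (Suc 0) gamma_plus"
  by (rule cmapI) (auto simp: gamma_plus_def dest!: cube2 cube2')

lemma cmap_diag: "cmap (Suc 0) 2 diag"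
  by (rule cmapI) (auto simp: diag_def dest!: cube1)

lemma gens_cmap: "(a, b, f) \<in> gens C \<Longrightarrow> cmap a b f"
  by (cases C) (auto simp: gens_def cmap_tau cmap_gm cmap_gp cmap_diag)

lemma dmor_cmap: "dmor (gens C) a b f \<Longrightarrow> cmap a b f"
proof (induction rule: dmor.induct)
  case (dm_base a b f)
  then show ?case by (simp add: cmap_def)
next
  case (dm_gen a b f)
  then show ?case by (rule gens_cmap)
next
  case (dm_comp a b f c g)
  then show ?case by (metis cmap_comp)
next
  case (dm_prod a b f c d g)
  then show ?case by (metis cmap_prod)
next
  case (dm_ext a b f g)
  then show ?case by (metis cmap_ext)
qed

lemma boxplus_cmap: "boxplus_mor a b f \<Longrightarrow> cmap a b f"
  by (simp add: boxplus_mor_def cmap_def)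

lemma sq_mor_cmap: "sq_mor C a b f \<Longrightarrow> cmap a b f"
  by (auto simp: sq_mor_def boxplus_cmap dmor_cmap split: if_splits)

lemma boxplus_mor_iff: "boxplus_mor m n f \<longleftrightarrow> cmap m n f \<and>
     (\<forall>x z. length x = m \<longrightarrow> length z = m \<longrightarrow> cube_le x z \<longrightarrow>
        (\<exists>u v. length u = n \<and> length v = n \<and> cube_le u v \<and> f ` cube_interval m x z = cube_interval n u v))"
  unfolding boxplus_mor_def cmap_def cube_def Ball_def Bex_def mem_Collect_eq by blast

lemma boxplus_D: "boxplus_mor m n f \<Longrightarrow> length x = m \<Longrightarrow> length z = m \<Longrightarrow> cube_le x z \<Longrightarrow>
        \<exists>u v. length u = n \<and> length v = n \<and> cube_le u v \<and> f ` cube_interval m x z = cube_interval n u v"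
  unfolding boxplus_mor_iff by blast

lemma boxplus_I: "cmap m n f \<Longrightarrow> (\<And>x z. length x = m \<Longrightarrow> length z = m \<Longrightarrow> cube_le x z \<Longrightarrow>
        \<exists>u v. length u = n \<and> length v = n \<and> cube_le u v \<and> f ` cube_interval m x z = cube_interval n u v)
   \<Longrightarrow> boxplus_mor m n f"
  unfolding boxplus_mor_iff by blast

lemma boxplus_comp: assumes f: "boxplus_mor a b f" and g: "boxplus_mor b c g" shows "boxplus_mor a c (g \<circ> f)"
proof (rule boxplus_I)
  show "cmap a c (g \<circ> f)" using f g cmap_comp boxplus_cmap by blast
  fix x z assume xz: "length x = a" "length z = a" "cube_le x z"
  obtain u v where uv: "length u = b" "length v = b" "cube_le u v" "f ` cube_interval a x z = cube_interval b u v"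
    using boxplus_D[OF f xz] by blast
  obtain u' v' where uv': "length u' = c" "length v' = c" "cube_le u' v'" "g ` cube_interval b u v = cube_interval c u' v'"
    using boxplus_D[OF g uv(1,2,3)] by blast
  have "(g \<circ> f) ` cube_interval a x z = g ` (f ` cube_interval a x z)" by (simp add: image_comp)
  then have "(g \<circ> f) ` cube_interval a x z = cube_interval c u' v'" using uv uv' by simp
  then show "\<exists>u v. length u = c \<and> length v = c \<and> cube_le u v \<and> (g \<circ> f) ` cube_interval a x z = cube_interval c u v"
    using uv' by blast
qed

lemma cube_interval_sub: "cube_interval m x z \<subseteq> cube m"
  by (auto simp: cube_interval_def)

lemma boxplus_ext: assumes "boxplus_mor a b f" "\<forall>x\<in>cube a. g x = f x" shows "boxplus_mor a b g"
proof (rule boxplus_I)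
  show "cmap a b g" using assms boxplus_cmap cmap_ext by blast
  fix x z assume xz: "length x = a" "length z = a" "cube_le x z"
  obtain u v where uv: "length u = b" "length v = b" "cube_le u v" "f ` cube_interval a x z = cube_interval b u v"
    using boxplus_D[OF assms(1) xz] by blast
  have "g ` cube_interval a x z = f ` cube_interval a x z"
    by (rule image_cong) (use assms(2) in \<open>auto simp: cube_interval_def\<close>)
  then show "\<exists>u v. length u = b \<and> length v = b \<and> cube_le u v \<and> g ` cube_interval a x z = cube_interval b u v"
    using uv by (intro exI[of _ u] exI[of _ v]) simp
qed

lemma cube_interval_append:
  assumes "length x = a + c" "length z = a + c"
  shows "cube_interval (a+c) x z = (\<lambda>(p,q). p@q) ` (cube_interval a (take a x) (take a z) \<times> cube_interval c (drop a x) (drop a z))"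
proof (rule set_eqI)
  fix y
  show "y \<in> cube_interval (a+c) x z \<longleftrightarrow> y \<in> (\<lambda>(p,q). p@q) ` (cube_interval a (take a x) (take a z) \<times> cube_interval c (drop a x) (drop a z))"
  proof
    assume y: "y \<in> cube_interval (a+c) x z"
    then have yl: "cube_le x y" "cube_le y z" "length y = a + c"
      by (auto simp: cube_interval_def)
    have "take a y \<in> cube_interval a (take a x) (take a z)"
      using yl by (simp add: cube_interval_def cube_le_take)
    moreover have "drop a y \<in> cube_interval c (drop a x) (drop a z)"
      using yl by (simp add: cube_interval_def cube_le_drop)
    ultimately have "(take a y, drop a y) \<in> cube_interval a (take a x) (take a z) \<times> cube_interval c (drop a x) (drop a z)"
      by blast
    moreover have "y = (\<lambda>(p,q). p@q) (take a y, drop a y)" by simp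
    ultimately show "y \<in> (\<lambda>(p,q). p@q) ` (cube_interval a (take a x) (take a z) \<times> cube_interval c (drop a x) (drop a z))"
      by (rule rev_image_eqI)
  next
    assume "y \<in> (\<lambda>(p,q). p@q) ` (cube_interval a (take a x) (take a z) \<times> cube_interval c (drop a x) (drop a z))"
    then obtain p q where pq: "y = p @ q" "p \<in> cube_interval a (take a x) (take a z)" "q \<in> cube_interval c (drop a x) (drop a z)"
      by auto
    have lp: "length p = a" "length (take a x) = a" "length (take a z) = a" using pq assms by (auto simp: cube_interval_def)
    have "cube_le (take a x @ drop a x) (p @ q)"
      using pq lp by (subst cube_le_append) (auto simp: cube_interval_def)
    moreover have "cube_le (p @ q) (take a z @ drop a z)"
      using pq lp by (subst cube_le_append) (auto simp: cube_interval_def)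
    ultimately show "y \<in> cube_interval (a+c) x z"
      using pq assms lp by (auto simp: cube_interval_def)
  qed
qed

lemma boxplus_prod: assumes f: "boxplus_mor a b f" and g: "boxplus_mor c d g" shows
   "boxplus_mor (a+c) (b+d) (\<lambda>xs. f (take a xs) @ g (drop a xs))"
proof (rule boxplus_I)
  show "cmap (a+c) (b+d) (\<lambda>xs. f (take a xs) @ g (drop a xs))" using f g cmap_prod boxplus_cmap by blast
  fix x z assume xz: "length x = a + c" "length z = a + c" "cube_le x z"
  then obtain u1 v1 where uv1: "length u1 = b" "length v1 = b" "cube_le u1 v1"
     "f ` cube_interval a (take a x) (take a z) = cube_interval b u1 v1"
    using boxplus_D[OF f, of "take a x" "take a z"] xz cube_le_take[OF xz(3)] by auto
  obtain u2 v2 where uv2: "length u2 = d" "length v2 = d" "cube_le u2 v2"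
     "g ` cube_interval c (drop a x) (drop a z) = cube_interval d u2 v2"
    using boxplus_D[OF g, of "drop a x" "drop a z"] xz cube_le_drop[OF xz(3)] by auto
  let ?h = "\<lambda>xs. f (take a xs) @ g (drop a xs)"
  have "?h ` cube_interval (a+c) x z = ?h ` ((\<lambda>(p,q). p@q) ` (cube_interval a (take a x) (take a z) \<times> cube_interval c (drop a x) (drop a z)))"
    using xz by (simp add: cube_interval_append)
  also have "\<dots> = (\<lambda>(p,q). f p @ g q) ` (cube_interval a (take a x) (take a z) \<times> cube_interval c (drop a x) (drop a z))"
    unfolding image_comp by (rule image_cong) (auto simp: cube_interval_def)
  also have "\<dots> = (\<lambda>(p,q). p@q) ` (f ` cube_interval a (take a x) (take a z) \<times> g ` cube_interval c (drop a x) (drop a z))"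
    by force
  also have "\<dots> = cube_interval (b+d) (u1@u2) (v1@v2)"
    using uv1 uv2 by (simp add: cube_interval_append)
  finally show "\<exists>u v. length u = b + d \<and> length v = b + d \<and> cube_le u v \<and> ?h ` cube_interval (a+c) x z = cube_interval (b+d) u v"
    using uv1 uv2 by (intro exI[of _ "u1@u2"] exI[of _ "v1@v2"]) (simp add: cube_le_append)
qed

lemma boxplus_id: "boxplus_mor a a (\<lambda>xs. xs)"
  by (rule boxplus_I) (auto intro!: cmapI)

lemma boxplus_term: "boxplus_mor a 0 (\<lambda>xs. [])"
proof (rule boxplus_I)
  show "cmap a 0 (\<lambda>xs. [])" by (auto intro: cmapI)
  fix x z assume "length x = a" "length z = a" "cube_le x z"
  then have "(\<lambda>xs. []) ` cube_interval a x z = cube_interval 0 [] []"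
    by (auto simp: cube_interval_def)
  then show "\<exists>u v. length u = 0 \<and> length v = 0 \<and> cube_le u v \<and> (\<lambda>xs. []) ` cube_interval a x z = cube_interval 0 u v"
    by auto
qed



lemma dmor_id: "dmor G a a (\<lambda>xs. xs)"
proof (induction a)
  case 0
  show ?case by (rule dm_base) (auto simp: mono_betw_def)
next
  case (Suc a)
  have "dmor G (1 + a) (1 + a) (\<lambda>xs. (\<lambda>xs. xs) (take 1 xs) @ (\<lambda>xs. xs) (drop 1 xs))"
    by (rule dm_prod[OF _ Suc]) (rule dm_base, auto simp: mono_betw_def)
  then show ?case by simp
qed

lemma dmor_term: "dmor G a 0 (\<lambda>xs. [])"
proof (induction a)
  case 0
  show ?case by (rule dm_base) (auto simp: mono_betw_def)
next
  case (Suc a)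
  have "dmor G (1 + a) (0 + 0) (\<lambda>xs. (\<lambda>xs. []) (take 1 xs) @ (\<lambda>xs. []) (drop 1 xs))"
    by (rule dm_prod[OF _ Suc]) (rule dm_base, auto simp: mono_betw_def)
  then show ?case by simp
qed

lemma sq_mor_comp: "sq_mor C a b f \<Longrightarrow> sq_mor C b c g \<Longrightarrow> sq_mor C a c (g \<circ> f)"
  by (auto simp: sq_mor_def boxplus_comp intro: dm_comp split: if_splits)

lemma sq_mor_ext: "sq_mor C a b f \<Longrightarrow> (\<forall>x\<in>cube a. g x = f x) \<Longrightarrow> sq_mor C a b g"
  by (auto simp: sq_mor_def intro: boxplus_ext dm_ext split: if_splits)

lemma sq_mor_prod: "sq_mor C a b f \<Longrightarrow> sq_mor C c d g \<Longrightarrow>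
   sq_mor C (a+c) (b+d) (\<lambda>xs. f (take a xs) @ g (drop a xs))"
  by (auto simp: sq_mor_def intro: boxplus_prod dm_prod split: if_splits)

lemma sq_mor_id: "sq_mor C a a (\<lambda>xs. xs)"
  by (auto simp: sq_mor_def boxplus_id dmor_id)

lemma sq_mor_term: "sq_mor C a 0 (\<lambda>xs. [])"
  by (auto simp: sq_mor_def boxplus_term dmor_term)

section \<open>Restriction to subcubes\<close>

definition rs :: "(bool list \<Rightarrow> bool list) \<Rightarrow> bool list \<Rightarrow> bool list \<Rightarrow> bool list \<Rightarrow> bool list" where
  "rs f u v = (\<lambda>w. rd (f u) (f v) (f (fill u v w)))"

lemma cmap_rs: assumes f: "cmap m n f" and uv: "length u = m" "length v = m" "cube_le u v"
  shows "cmap (nd u v) (nd (f u) (f v)) (rs f u v)"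
proof (rule cmapI)
  fix w :: "bool list" assume "length w = nd u v"
  then show "length (rs f u v w) = nd (f u) (f v)"
    using f uv by (simp add: rs_def length_rd length_fill cmapD)
next
  fix w w' :: "bool list" assume "length w = nd u v" "length w' = nd u v" "cube_le w w'"
  then show "cube_le (rs f u v w) (rs f u v w')"
    using f uv by (simp add: rs_def length_fill cmapD fill_mono rd_mono)
qed

lemma fill_image:
  assumes "cube_le u v" "length u = m" "length v = m" "length w1 = nd u v" "length w2 = nd u v" "cube_le w1 w2"
  shows "fill u v ` cube_interval (nd u v) w1 w2 = cube_interval m (fill u v w1) (fill u v w2)"
proof (rule set_eqI, rule iffI)
  fix y assume "y \<in> fill u v ` cube_interval (nd u v) w1 w2"
  then obtain w where w: "y = fill u v w" "length w = nd u v" "cube_le w1 w" "cube_le w w2"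
    by (auto simp: cube_interval_def)
  then show "y \<in> cube_interval m (fill u v w1) (fill u v w2)"
    using assms by (auto simp: cube_interval_def length_fill fill_mono)
next
  fix y assume y: "y \<in> cube_interval m (fill u v w1) (fill u v w2)"
  then have "cube_le u y" "cube_le y v"
    using fill_between[OF assms(1)] cube_le_trans by (auto simp: cube_interval_def) 
  then have "y = fill u v (rd u v y)" by (simp add: fill_rd)
  moreover have "rd u v y \<in> cube_interval (nd u v) w1 w2"
    using y assms rd_mono[of "fill u v w1" y u v] rd_mono[of y "fill u v w2" u v]
    by (auto simp: cube_interval_def rd_fill length_rd)
  ultimately show "y \<in> fill u v ` cube_interval (nd u v) w1 w2" by (rule rev_image_eqI[rotated])
qed

lemma rd_image:
  assumes "cube_le u p" "cube_le p q" "cube_le q v" "length u = m" "length v = m"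
  shows "rd u v ` cube_interval m p q = cube_interval (nd u v) (rd u v p) (rd u v q)"
proof (rule set_eqI, rule iffI)
  fix w assume "w \<in> rd u v ` cube_interval m p q"
  then obtain y where "w = rd u v y" "length y = m" "cube_le p y" "cube_le y q"
    by (auto simp: cube_interval_def)
  then show "w \<in> cube_interval (nd u v) (rd u v p) (rd u v q)"
    using assms by (auto simp: cube_interval_def length_rd rd_mono)
next
  fix w assume w: "w \<in> cube_interval (nd u v) (rd u v p) (rd u v q)"
  have lp: "length p = m" "length q = m" using assms cube_le_length by auto
  have uv: "cube_le u v" using assms cube_le_trans by blast
  have "rd u v (fill u v w) = w" using w assms by (simp add: rd_fill cube_interval_def)
  moreover have "fill u v w \<in> cube_interval m p q"
  proof -
    have "cube_le (fill u v (rd u v p)) (fill u v w)"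
      using w assms lp by (intro fill_mono) (auto simp: cube_interval_def)
    moreover have "cube_le (fill u v w) (fill u v (rd u v q))"
      using w assms lp by (intro fill_mono) (auto simp: cube_interval_def)
    moreover have "fill u v (rd u v p) = p" "fill u v (rd u v q) = q"
      using assms cube_le_trans by (auto intro: fill_rd)
    ultimately show ?thesis using assms by (auto simp: cube_interval_def length_fill)
  qed
  ultimately show "w \<in> rd u v ` cube_interval m p q" by (metis rev_image_eqI)
qed

lemma boxplus_rs: assumes f: "boxplus_mor m n f" and uv: "length u = m" "length v = m" "cube_le u v"
  shows "boxplus_mor (nd u v) (nd (f u) (f v)) (rs f u v)"
proof (rule boxplus_I)
  have cf: "cmap m n f" using f boxplus_cmap by blast
  show "cmap (nd u v) (nd (f u) (f v)) (rs f u v)" using cmap_rs[OF cf uv] .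
  fix w1 w2 assume w: "length w1 = nd u v" "length w2 = nd u v" "cube_le w1 w2"
  have I1: "fill u v ` cube_interval (nd u v) w1 w2 = cube_interval m (fill u v w1) (fill u v w2)"
    using fill_image[OF uv(3,1,2) w(1,2,3)] .
  have fl: "length (fill u v w1) = m" "length (fill u v w2) = m" using uv by (auto simp: length_fill)
  obtain p q where pq: "length p = n" "length q = n" "cube_le p q"
     "f ` cube_interval m (fill u v w1) (fill u v w2) = cube_interval n p q"
    using boxplus_D[OF f fl] w uv fill_mono by auto
  have sub: "cube_interval m (fill u v w1) (fill u v w2) \<subseteq> cube_interval m u v"
    using fill_between[OF uv(3)] cube_le_trans by (auto simp: cube_interval_def)
  have pin: "p \<in> f ` cube_interval m (fill u v w1) (fill u v w2)" "q \<in> f ` cube_interval m (fill u v w1) (fill u v w2)"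
    using pq by (auto simp: cube_interval_def)
  have "cube_le (f u) p \<and> cube_le p (f v)" "cube_le (f u) q \<and> cube_le q (f v)"
    using pin sub uv cmapD(2)[OF cf] by (auto simp: cube_interval_def subset_iff)
  then have I2: "rd (f u) (f v) ` cube_interval n p q = cube_interval (nd (f u) (f v)) (rd (f u) (f v) p) (rd (f u) (f v) q)"
    using pq uv cf by (intro rd_image) (auto simp: cmapD)
  have "rs f u v ` cube_interval (nd u v) w1 w2 = rd (f u) (f v) ` f ` fill u v ` cube_interval (nd u v) w1 w2"
    by (auto simp: rs_def image_comp)
  also have "\<dots> = cube_interval (nd (f u) (f v)) (rd (f u) (f v) p) (rd (f u) (f v) q)"
    using I1 pq(4) I2 by simp
  finally show "\<exists>u' v'. length u' = nd (f u) (f v) \<and> length v' = nd (f u) (f v) \<and> cube_le u' v' \<and>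
      rs f u v ` cube_interval (nd u v) w1 w2 = cube_interval (nd (f u) (f v)) u' v'"
    using pq uv cf by (intro exI conjI) (auto simp: length_rd cmapD rd_mono)
qed



lemma dm_base_cmap: "cmap a b f \<Longrightarrow> a \<le> 1 \<Longrightarrow> b \<le> 1 \<Longrightarrow> dmor G a b f"
  by (rule dm_base) (auto simp: cmap_def)

lemma nd_le': "length a = n \<Longrightarrow> nd a b \<le> n"
  using nd_le by auto

lemma rs_tau: assumes G: "(2,2,tau) \<in> G" and uv: "length u = 2" "length v = 2" "cube_le u v"
  shows "dmor G (nd u v) (nd (tau u) (tau v)) (rs tau u v)"
proof -
  have cm: "cmap (nd u v) (nd (tau u) (tau v)) (rs tau u v)" using cmap_rs[OF cmap_tau uv] .
  obtain p q p' q' where u: "u = [p,q]" and v: "v = [p',q']" using uv cube2 by metis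
  have "(nd u v \<le> 1 \<and> nd (tau u) (tau v) \<le> 1) \<or> (u = [False,False] \<and> v = [True,True])"
    using uv(3) unfolding u v by (cases p; cases q; cases p'; cases q') (auto simp: tau_def)
  then show ?thesis
  proof
    assume "nd u v \<le> 1 \<and> nd (tau u) (tau v) \<le> 1"
    then show ?thesis using cm dm_base_cmap by blast
  next
    assume e: "u = [False,False] \<and> v = [True,True]"
    have "dmor G 2 2 (rs tau u v)"
      by (rule dm_ext[OF dm_gen[OF G]]) (auto simp: e rs_def tau_def dest!: cube2 cube2')
    then show ?thesis using e by (simp add: tau_def numeral_2_eq_2)
  qed
qed

lemma rs_gm: assumes G: "(2,1,gamma_minus) \<in> G" and uv: "length u = 2" "length v = 2" "cube_le u v"
  shows "dmor G (nd u v) (nd (gamma_minus u) (gamma_minus v)) (rs gamma_minus u v)"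
proof -
  have cm: "cmap (nd u v) (nd (gamma_minus u) (gamma_minus v)) (rs gamma_minus u v)" using cmap_rs[OF cmap_gm uv] by simp
  obtain p q p' q' where u: "u = [p,q]" and v: "v = [p',q']" using uv cube2 by metis
  have "(nd u v \<le> 1 \<and> nd (gamma_minus u) (gamma_minus v) \<le> 1) \<or> (u = [False,False] \<and> v = [True,True])"
    using uv(3) unfolding u v by (cases p; cases q; cases p'; cases q') (auto simp: gamma_minus_def)
  then show ?thesis
  proof
    assume "nd u v \<le> 1 \<and> nd (gamma_minus u) (gamma_minus v) \<le> 1"
    then show ?thesis using cm dm_base_cmap by blast
  next
    assume e: "u = [False,False] \<and> v = [True,True]"
    have "dmor G 2 1 (rs gamma_minus u v)"
      by (rule dm_ext[OF dm_gen[OF G]]) (auto simp: e rs_def gamma_minus_def dest!: cube2 cube2')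
    then show ?thesis using e by (simp add: gamma_minus_def numeral_2_eq_2)
  qed
qed

lemma rs_gp: assumes G: "(2,1,gamma_plus) \<in> G" and uv: "length u = 2" "length v = 2" "cube_le u v"
  shows "dmor G (nd u v) (nd (gamma_plus u) (gamma_plus v)) (rs gamma_plus u v)"
proof -
  have cm: "cmap (nd u v) (nd (gamma_plus u) (gamma_plus v)) (rs gamma_plus u v)" using cmap_rs[OF cmap_gp uv] by simp
  obtain p q p' q' where u: "u = [p,q]" and v: "v = [p',q']" using uv cube2 by metis
  have "(nd u v \<le> 1 \<and> nd (gamma_plus u) (gamma_plus v) \<le> 1) \<or> (u = [False,False] \<and> v = [True,True])"
    using uv(3) unfolding u v by (cases p; cases q; cases p'; cases q') (auto simp: gamma_plus_def)
  then show ?thesis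
  proof
    assume "nd u v \<le> 1 \<and> nd (gamma_plus u) (gamma_plus v) \<le> 1"
    then show ?thesis using cm dm_base_cmap by blast
  next
    assume e: "u = [False,False] \<and> v = [True,True]"
    have "dmor G 2 1 (rs gamma_plus u v)"
      by (rule dm_ext[OF dm_gen[OF G]]) (auto simp: e rs_def gamma_plus_def dest!: cube2 cube2')
    then show ?thesis using e by (simp add: gamma_plus_def numeral_2_eq_2)
  qed
qed

lemma rs_diag: assumes G: "(1,2,diag) \<in> G" and uv: "length u = 1" "length v = 1" "cube_le u v"
  shows "dmor G (nd u v) (nd (diag u) (diag v)) (rs diag u v)"
proof -
  have cm: "cmap (nd u v) (nd (diag u) (diag v)) (rs diag u v)" using cmap_rs[OF cmap_diag] uv by simp
  obtain p p' where u: "u = [p]" and v: "v = [p']" using uv cube1 by (metis One_nat_def)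
  have "(nd u v \<le> 1 \<and> nd (diag u) (diag v) \<le> 1) \<or> (u = [False] \<and> v = [True])"
    using uv(3) unfolding u v by (cases p; cases p') (auto simp: diag_def)
  then show ?thesis
  proof
    assume "nd u v \<le> 1 \<and> nd (diag u) (diag v) \<le> 1"
    then show ?thesis using cm dm_base_cmap by blast
  next
    assume e: "u = [False] \<and> v = [True]"
    have "dmor G 1 2 (rs diag u v)"
      by (rule dm_ext[OF dm_gen[OF G]]) (auto simp: e rs_def diag_def dest!: cube1)
    then show ?thesis using e by (simp add: diag_def numeral_2_eq_2)
  qed
qed

lemma rs_gen: "(a, b, f) \<in> gens C \<Longrightarrow> length u = a \<Longrightarrow> length v = a \<Longrightarrow> cube_le u v \<Longrightarrow>
   dmor (gens C) (nd u v) (nd (f u) (f v)) (rs f u v)"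
proof -
  assume g: "(a, b, f) \<in> gens C" and uv: "length u = a" "length v = a" "cube_le u v"
  then have "(a = 2 \<and> b = 2 \<and> f = tau) \<or> (a = 2 \<and> b = 1 \<and> f = gamma_minus) \<or> (a = 2 \<and> b = 1 \<and> f = gamma_plus)
     \<or> (a = 1 \<and> b = 2 \<and> f = diag)"
    apply (cases C) apply (simp_all add: gens_def) apply (elim disjE; simp)+ done
  then show ?thesis
  proof (elim disjE conjE)
    assume "a = 2" "b = 2" "f = tau" then show ?thesis using g uv rs_tau[of "gens C" u v] by simp
  next
    assume "a = 2" "b = 1" "f = gamma_minus" then show ?thesis using g uv rs_gm[of "gens C" u v] by simp
  next
    assume "a = 2" "b = 1" "f = gamma_plus" then show ?thesis using g uv rs_gp[of "gens C" u v] by simp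
  next
    assume "a = 1" "b = 2" "f = diag" then show ?thesis using g uv rs_diag[of "gens C" u v] by simp
  qed
qed

lemma dmor_rs: "dmor (gens C) a b f \<Longrightarrow> length u = a \<Longrightarrow> length v = a \<Longrightarrow> cube_le u v \<Longrightarrow>
   dmor (gens C) (nd u v) (nd (f u) (f v)) (rs f u v)"
proof (induction arbitrary: u v rule: dmor.induct)
  case (dm_base a b f)
  have "cmap a b f" using dm_base by (simp add: cmap_def)
  then have "cmap (nd u v) (nd (f u) (f v)) (rs f u v)" using cmap_rs dm_base by blast
  moreover have "nd u v \<le> 1"
    using nd_le[of u v] dm_base.prems(1) dm_base.hyps(1) by simp
  moreover have "nd (f u) (f v) \<le> 1"
    using nd_le[of "f u" "f v"] cmapD(1)[OF \<open>cmap a b f\<close> dm_base.prems(1)] dm_base.hyps(2) by simp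
  ultimately show ?case by (rule dm_base_cmap)
next
  case (dm_gen a b f)
  then show ?case by (rule rs_gen)
next
  case (dm_comp a b f c g)
  have cf: "cmap a b f" using dm_comp dmor_cmap by blast
  have fu: "length (f u) = b" "length (f v) = b" "cube_le (f u) (f v)"
    using dm_comp cf cmapD by auto
  have "dmor (gens C) (nd u v) (nd (g (f u)) (g (f v))) (rs g (f u) (f v) \<circ> rs f u v)"
    using dm_comp.IH(1)[OF dm_comp.prems] dm_comp.IH(2)[OF fu] by (rule dmor.dm_comp)
  moreover have "\<forall>w\<in>cube (nd u v). rs (g \<circ> f) u v w = (rs g (f u) (f v) \<circ> rs f u v) w"
  proof
    fix w assume w: "w \<in> cube (nd u v)"
    have "cube_le (f u) (f (fill u v w))" "cube_le (f (fill u v w)) (f v)"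
      using fill_between[OF dm_comp.prems(3)] dm_comp.prems cf by (auto simp: cmapD length_fill)
    then show "rs (g \<circ> f) u v w = (rs g (f u) (f v) \<circ> rs f u v) w"
      by (simp add: rs_def fill_rd)
  qed
  ultimately have "dmor (gens C) (nd u v) (nd (g (f u)) (g (f v))) (rs (g \<circ> f) u v)" by (rule dmor.dm_ext)
  then show ?case by (simp add: comp_def)
next
  case (dm_prod a b f c d g)
  have cf: "cmap a b f" and cg: "cmap c d g" using dm_prod dmor_cmap by blast+
  define u1 where "u1 = take a u"
  define u2 where "u2 = drop a u"
  define v1 where "v1 = take a v"
  define v2 where "v2 = drop a v"
  have u: "u = u1 @ u2" and v: "v = v1 @ v2" by (simp_all add: u1_def u2_def v1_def v2_def)
  have l: "length u1 = a" "length v1 = a" "length u2 = c" "length v2 = c"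
    using dm_prod.prems by (auto simp: u1_def u2_def v1_def v2_def)
  have le: "cube_le u1 v1" "cube_le u2 v2"
    using dm_prod.prems by (auto simp: u1_def u2_def v1_def v2_def cube_le_take cube_le_drop)
  have lf: "length (f u1) = b" "length (f v1) = b" using cf l cmapD by auto
  let ?h = "\<lambda>xs. f (take a xs) @ g (drop a xs)"
  have hu: "?h u = f u1 @ g u2" "?h v = f v1 @ g v2" by (simp_all add: u1_def u2_def v1_def v2_def)
  have nd1: "nd u v = nd u1 v1 + nd u2 v2" using u v l nd_append by simp
  have nd2: "nd (?h u) (?h v) = nd (f u1) (f v1) + nd (g u2) (g v2)" using hu lf nd_append by simp
  have "dmor (gens C) (nd u1 v1 + nd u2 v2) (nd (f u1) (f v1) + nd (g u2) (g v2))
     (\<lambda>w. rs f u1 v1 (take (nd u1 v1) w) @ rs g u2 v2 (drop (nd u1 v1) w))"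
    by (rule dmor.dm_prod[OF dm_prod.IH(1)[OF l(1,2) le(1)] dm_prod.IH(2)[OF l(3,4) le(2)]])
  moreover have "\<forall>w\<in>cube (nd u1 v1 + nd u2 v2). rs ?h u v w = rs f u1 v1 (take (nd u1 v1) w) @ rs g u2 v2 (drop (nd u1 v1) w)"
  proof
    fix w assume w: "w \<in> cube (nd u1 v1 + nd u2 v2)"
    have fl: "fill u v w = fill u1 v1 (take (nd u1 v1) w) @ fill u2 v2 (drop (nd u1 v1) w)"
      using u v l fill_append by simp
    have lfill: "length (fill u1 v1 (take (nd u1 v1) w)) = a" using l length_fill by simp
    have "rs ?h u v w = rd (f u1 @ g u2) (f v1 @ g v2) (f (fill u1 v1 (take (nd u1 v1) w)) @ g (fill u2 v2 (drop (nd u1 v1) w)))"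
      unfolding rs_def hu fl using lfill by simp
    also have "\<dots> = rs f u1 v1 (take (nd u1 v1) w) @ rs g u2 v2 (drop (nd u1 v1) w)"
      unfolding rs_def using lf lfill cf by (intro rd_append) (auto simp: cmapD)
    finally show "rs ?h u v w = rs f u1 v1 (take (nd u1 v1) w) @ rs g u2 v2 (drop (nd u1 v1) w)" .
  qed
  ultimately have "dmor (gens C) (nd u1 v1 + nd u2 v2) (nd (f u1) (f v1) + nd (g u2) (g v2)) (rs ?h u v)"
    by (rule dmor.dm_ext)
  then show ?case using nd1 nd2 by simp
next
  case (dm_ext a b f g)
  have d: "dmor (gens C) (nd u v) (nd (f u) (f v)) (rs f u v)" using dm_ext.IH[OF dm_ext.prems] .
  have e: "g u = f u" "g v = f v" using dm_ext.hyps(2) dm_ext.prems by auto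
  have "\<forall>w\<in>cube (nd u v). rs g u v w = rs f u v w"
    using dm_ext.hyps(2) dm_ext.prems by (auto simp: rs_def length_fill)
  then have "dmor (gens C) (nd u v) (nd (f u) (f v)) (rs g u v)" by (rule dmor.dm_ext[OF d])
  then show ?case using e by simp
qed

lemma sq_mor_rs: "sq_mor C m n f \<Longrightarrow> length u = m \<Longrightarrow> length v = m \<Longrightarrow> cube_le u v \<Longrightarrow>
   sq_mor C (nd u v) (nd (f u) (f v)) (rs f u v)"
  by (auto simp: sq_mor_def boxplus_rs dmor_rs split: if_splits)



definition pm :: "nat \<Rightarrow> (nat \<Rightarrow> nat) \<Rightarrow> bool list \<Rightarrow> bool list" where
  "pm K \<rho> xs = map (\<lambda>q. xs ! \<rho> q) [0..<K]"

definition ev :: "nat \<Rightarrow> nat \<Rightarrow> bool list" where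
  "ev K q = map (\<lambda>p. p = q) [0..<K]"

lemma length_pm[simp]: "length (pm K \<rho> xs) = K" by (simp add: pm_def)
lemma length_ev[simp]: "length (ev K q) = K" by (simp add: ev_def)

lemma pm_pm: "(\<forall>q<K. \<rho> q < K) \<Longrightarrow> pm K \<rho> (pm K \<pi> xs) = pm K (\<pi> \<circ> \<rho>) xs"
  by (auto simp: pm_def)

lemma pm_id: "length xs = K \<Longrightarrow> pm K id xs = xs"
  by (auto simp: pm_def intro: nth_equalityI)

lemma dmor_adj: assumes G: "(2,2,tau) \<in> G" and aK: "Suc a < K"
  shows "dmor G K K (pm K (Transposition.transpose a (Suc a)))"
proof -
  have h: "dmor G (a + (2 + (K - a - 2))) (a + (2 + (K - a - 2)))
     (\<lambda>xs. take a xs @ tau (take 2 (drop a xs)) @ drop 2 (drop a xs))"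
  proof -
    have i: "dmor G (2 + (K - a - 2)) (2 + (K - a - 2)) (\<lambda>ys. tau (take 2 ys) @ drop 2 ys)"
      using dm_prod[OF dm_gen[OF G] dmor_id[of G "K - a - 2"]] by simp
    show ?thesis using dm_prod[OF dmor_id[of G a] i] by simp
  qed
  have K: "a + (2 + (K - a - 2)) = K" using aK by simp
  have h': "dmor G K K (\<lambda>xs. take a xs @ tau (take 2 (drop a xs)) @ drop 2 (drop a xs))"
    by (rule h[unfolded K])
  have eq: "\<forall>xs\<in>cube K. pm K (Transposition.transpose a (Suc a)) xs = take a xs @ tau (take 2 (drop a xs)) @ drop 2 (drop a xs)"
  proof
    fix xs :: "bool list" assume xs: "xs \<in> cube K"
    have e: "take a xs @ tau (take 2 (drop a xs)) @ drop 2 (drop a xs) = take a xs @ [xs ! Suc a, xs ! a] @ drop (Suc (Suc a)) xs"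
      using xs aK by (simp add: tau_def numeral_2_eq_2)
    show "pm K (Transposition.transpose a (Suc a)) xs = take a xs @ tau (take 2 (drop a xs)) @ drop 2 (drop a xs)"
      unfolding e
    proof (rule nth_equalityI)
      show "length (pm K (Transposition.transpose a (Suc a)) xs) = length (take a xs @ [xs ! Suc a, xs ! a] @ drop (Suc (Suc a)) xs)"
        using xs aK by simp
      fix q assume "q < length (pm K (Transposition.transpose a (Suc a)) xs)"
      then have q: "q < K" by simp
      consider "q < a" | "q = a" | "q = Suc a" | "q > Suc a" by linarith
      then show "pm K (Transposition.transpose a (Suc a)) xs ! q = (take a xs @ [xs ! Suc a, xs ! a] @ drop (Suc (Suc a)) xs) ! q"
      proof cases
        case 4
        then have e1: "(take a xs @ [xs ! Suc a, xs ! a] @ drop (Suc (Suc a)) xs) ! q = drop (Suc (Suc a)) xs ! (q - a - 2)"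
          using xs aK by (simp add: nth_append numeral_2_eq_2)
        have e2: "Suc (Suc a) + (q - a - 2) = q" using 4 by arith
        have "drop (Suc (Suc a)) xs ! (q - a - 2) = xs ! q"
        proof -
          have q2: "Suc (Suc (q - 2)) = q" using 4 by arith
          show ?thesis using nth_drop[of "Suc (Suc a)" xs "q - a - 2"] xs aK e2 q2 by simp
        qed
        moreover have "pm K (Transposition.transpose a (Suc a)) xs ! q = xs ! q"
          using 4 q by (simp add: pm_def transpose_def)
        ultimately show ?thesis using e1 by simp
      qed (use xs aK q in \<open>auto simp: pm_def transpose_def nth_append\<close>)
    qed
  qed
  show ?thesis by (rule dm_ext[OF h' eq])
qed

lemma transpose_lt: "a < K \<Longrightarrow> b < K \<Longrightarrow> \<forall>q<K. Transposition.transpose a b q < K"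
  by (simp add: transpose_def)

lemma dmor_pm_comp: "dmor G K K (pm K p) \<Longrightarrow> dmor G K K (pm K r) \<Longrightarrow> \<forall>q<K. r q < K \<Longrightarrow> dmor G K K (pm K (p \<circ> r))"
proof -
  assume p: "dmor G K K (pm K p)" and r: "dmor G K K (pm K r)" and rK: "\<forall>q<K. r q < K"
  have "dmor G K K (pm K r \<circ> pm K p)" by (rule dm_comp[OF p r])
  moreover have "\<forall>xs\<in>cube K. pm K (p \<circ> r) xs = (pm K r \<circ> pm K p) xs"
    using pm_pm[OF rK] by simp
  ultimately show ?thesis by (rule dm_ext)
qed

lemma dmor_transp: assumes G: "(2,2,tau) \<in> G"
  shows "a < b \<Longrightarrow> b < K \<Longrightarrow> dmor G K K (pm K (Transposition.transpose a b))"
proof (induction b)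
  case 0
  then show ?case by simp
next
  case (Suc b)
  show ?case
  proof (cases "a = b")
    case True
    then show ?thesis using dmor_adj[OF G] Suc.prems by simp
  next
    case False
    then have ab: "a < b" using Suc.prems by simp
    have e: "Transposition.transpose a (Suc b) = Transposition.transpose b (Suc b) \<circ> (Transposition.transpose a b \<circ> Transposition.transpose b (Suc b))"
      using ab by (auto simp: transpose_def fun_eq_iff)
    have t1: "dmor G K K (pm K (Transposition.transpose b (Suc b)))" using dmor_adj[OF G] Suc.prems by simp
    have t2: "dmor G K K (pm K (Transposition.transpose a b))" using Suc ab by simp
    have lt1: "\<forall>q<K. Transposition.transpose b (Suc b) q < K" using Suc.prems by (intro transpose_lt) auto
    have lt2: "\<forall>q<K. (Transposition.transpose a b \<circ> Transposition.transpose b (Suc b)) q < K"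
      using Suc.prems ab lt1 by (simp add: transpose_def)
    have "dmor G K K (pm K (Transposition.transpose a b \<circ> Transposition.transpose b (Suc b)))"
      by (rule dmor_pm_comp[OF t2 t1 lt1])
    then have fin: "dmor G K K (pm K (Transposition.transpose b (Suc b) \<circ> (Transposition.transpose a b \<circ> Transposition.transpose b (Suc b))))"
      by (rule dmor_pm_comp[OF t1 _ lt2])
    show ?thesis unfolding e by (rule fin)
  qed
qed

lemma dmor_perm: assumes G: "(2,2,tau) \<in> G" and p: "p permutes {..<K}"
  shows "dmor G K K (pm K p)"
  using p finite_lessThan
proof (induction rule: permutes_induct)
  case id
  have "\<forall>xs\<in>cube K. pm K id xs = xs" by (simp add: pm_id)
  then show ?case using dmor_id dm_ext by metis
next
  case (swap a b p)
  have t: "dmor G K K (pm K (Transposition.transpose a b))"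
  proof (cases "a < b")
    case True
    then show ?thesis using dmor_transp[OF G] swap by auto
  next
    case False
    then have "b < a" using swap by auto
    then show ?thesis using dmor_transp[OF G, of b a K] swap by (simp add: transpose_commute)
  qed
  have IH: "dmor G K K (pm K p)" using swap by blast
  have pp: "p permutes {..<K}" using swap by blast
  have "\<forall>q<K. p q < K" using pp permutes_in_image by fastforce
  then show ?case by (rule dmor_pm_comp[OF t IH])
qed

lemma ev_le: "length y = K \<Longrightarrow> p < K \<Longrightarrow> cube_le (ev K p) y \<longleftrightarrow> y ! p"
  by (auto simp: cube_le_nth ev_def)

lemma le_bot: "cube_le y (replicate K False) \<Longrightarrow> y = replicate K False"
  by (auto simp: cube_le_nth intro: nth_equalityI)

lemma bot_le: "length y = K \<Longrightarrow> cube_le (replicate K False) y"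
  by (auto simp: cube_le_nth)

lemma le_ev: assumes "length y = K" "cube_le y (ev K q)" shows "y = replicate K False \<or> y = ev K q"
proof -
  have le: "\<And>j. j < K \<Longrightarrow> y ! j \<Longrightarrow> j = q"
  proof -
    fix j assume j: "j < K" "y ! j"
    then have "ev K q ! j" using assms unfolding cube_le_nth by auto
    then show "j = q" using j by (simp add: ev_def)
  qed
  show ?thesis
  proof (cases "q < K \<and> y ! q")
    case True
    have "y = ev K q"
    proof (rule nth_equalityI)
      show "length y = length (ev K q)" using assms by simp
      fix j assume "j < length y"
      then show "y ! j = ev K q ! j" using le True assms(1) by (auto simp: ev_def)
    qed
    then show ?thesis by simp
  next
    case False
    have "y = replicate K False"
    proof (rule nth_equalityI)
      show "length y = length (replicate K False)" using assms by simp
      fix j assume "j < length y"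
      then show "y ! j = replicate K False ! j" using le False assms(1) by auto
    qed
    then show ?thesis by simp
  qed
qed

lemma atom_ev: assumes "length a = K" "a \<noteq> replicate K False"
   "\<forall>y. length y = K \<longrightarrow> cube_le y a \<longrightarrow> y = replicate K False \<or> y = a"
  shows "\<exists>p<K. a = ev K p"
proof -
  have "\<exists>p<K. a ! p"
  proof (rule ccontr)
    assume "\<not> (\<exists>p<K. a ! p)"
    then have "a = replicate K False" using assms(1) by (intro nth_equalityI) auto
    then show False using assms(2) by simp
  qed
  then obtain p where p: "p < K" "a ! p" by blast
  then have "cube_le (ev K p) a" using assms(1) ev_le by blast
  then have d: "ev K p = replicate K False \<or> ev K p = a" using assms(3) by simp
  have "ev K p ! p" using p by (simp add: ev_def)
  then have "ev K p \<noteq> replicate K False" using p by auto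
  then show ?thesis using p d by auto
qed

lemma card_cube: "card (cube K) = 2 ^ K"
proof -
  have "cube K = {xs. set xs \<subseteq> UNIV \<and> length xs = K}" by (auto simp: cube_def)
  then show ?thesis using card_lists_length_eq[of "UNIV :: bool set" K] by simp
qed

lemma iso_perm:
  assumes bij: "bij_betw \<sigma> (cube K) (cube K')"
    and ord: "\<forall>a\<in>cube K. \<forall>b\<in>cube K. cube_le a b \<longleftrightarrow> cube_le (\<sigma> a) (\<sigma> b)"
  shows "K' = K \<and> (\<exists>\<rho>. \<rho> permutes {..<K} \<and> (\<forall>y\<in>cube K. \<sigma> y = pm K \<rho> y))"
proof -
  have "card (cube K) = card (cube K')" using bij by (rule bij_betw_same_card)
  then have KK: "K' = K" by (simp add: card_cube)
  define \<tau> where "\<tau> = inv_into (cube K) \<sigma>"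
  have \<tau>1: "\<And>y. length y = K \<Longrightarrow> length (\<tau> y) = K \<and> \<sigma> (\<tau> y) = y"
    using bij KK unfolding \<tau>_def
    by (metis bij_betw_apply bij_betw_inv_into bij_betw_inv_into_right in_cube)
  have \<tau>2: "\<And>y. length y = K \<Longrightarrow> \<tau> (\<sigma> y) = y"
    using bij unfolding \<tau>_def by (simp add: bij_betw_inv_into_left)
  have \<sigma>l: "\<And>y. length y = K \<Longrightarrow> length (\<sigma> y) = K" using bij KK bij_betw_apply by fastforce
  have inj: "\<And>y y'. length y = K \<Longrightarrow> length y' = K \<Longrightarrow> \<sigma> y = \<sigma> y' \<Longrightarrow> y = y'" using \<tau>2 by metis
  let ?bot = "replicate K False"
  have sbot: "\<sigma> ?bot = ?bot"
  proof -
    have "cube_le ?bot (\<tau> ?bot)" using \<tau>1[of ?bot] bot_le[of "\<tau> ?bot" K] by simp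
    then have "cube_le (\<sigma> ?bot) (\<sigma> (\<tau> ?bot))" using ord \<tau>1[of ?bot] by simp
    then show ?thesis using \<tau>1[of ?bot] le_bot by simp
  qed
  have atoms: "\<And>q. q < K \<Longrightarrow> \<exists>p<K. \<tau> (ev K q) = ev K p"
  proof -
    fix q assume q: "q < K"
    let ?a = "\<tau> (ev K q)"
    have la: "length ?a = K" and sa: "\<sigma> ?a = ev K q" using \<tau>1[of "ev K q"] by auto
    show "\<exists>p<K. ?a = ev K p"
    proof (rule atom_ev[OF la])
      show "?a \<noteq> ?bot"
      proof
        assume "?a = ?bot"
        then have "ev K q = ?bot" using sa sbot by simp
        then show False using q ev_le[of ?bot K q] by (metis bot_le ev_le length_replicate nth_replicate)
      qed
      show "\<forall>y. length y = K \<longrightarrow> cube_le y ?a \<longrightarrow> y = ?bot \<or> y = ?a"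
      proof (intro allI impI)
        fix y assume y: "length y = K" "cube_le y ?a"
        then have "cube_le (\<sigma> y) (ev K q)" using ord la sa by auto
        then have "\<sigma> y = ?bot \<or> \<sigma> y = \<sigma> ?a" using le_ev \<sigma>l y sa by simp
        then show "y = ?bot \<or> y = ?a" using inj y la sbot by (metis length_replicate)
      qed
    qed
  qed
  define \<rho> where "\<rho> = (\<lambda>q. if q < K then (SOME p. p < K \<and> \<tau> (ev K q) = ev K p) else q)"
  have \<rho>: "\<And>q. q < K \<Longrightarrow> \<rho> q < K \<and> \<tau> (ev K q) = ev K (\<rho> q)"
  proof -
    fix q assume q: "q < K"
    show "\<rho> q < K \<and> \<tau> (ev K q) = ev K (\<rho> q)"
      using someI_ex[OF atoms[OF q]] q by (simp add: \<rho>_def)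
  qed
  have rep: "\<forall>y\<in>cube K. \<sigma> y = pm K \<rho> y"
  proof
    fix y assume "y \<in> cube K"
    then have y: "length y = K" by simp
    show "\<sigma> y = pm K \<rho> y"
    proof (rule nth_equalityI)
      show "length (\<sigma> y) = length (pm K \<rho> y)" using \<sigma>l y by simp
      fix q assume "q < length (\<sigma> y)"
      then have q: "q < K" using \<sigma>l y by simp
      have "\<sigma> y ! q = cube_le (ev K q) (\<sigma> y)" using ev_le \<sigma>l y q by simp
      also have "\<dots> = cube_le (\<sigma> (\<tau> (ev K q))) (\<sigma> y)" using \<tau>1[of "ev K q"] by simp
      also have "\<dots> = cube_le (\<tau> (ev K q)) y" using ord \<tau>1[of "ev K q"] y by simp
      also have "\<dots> = cube_le (ev K (\<rho> q)) y" using \<rho> q by simp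
      also have "\<dots> = y ! \<rho> q" using ev_le y \<rho> q by simp
      finally show "\<sigma> y ! q = pm K \<rho> y ! q" using q by (simp add: pm_def)
    qed
  qed
  have injr: "inj_on \<rho> {..<K}"
  proof (rule inj_onI)
    fix q q' assume q: "q \<in> {..<K}" "q' \<in> {..<K}" "\<rho> q = \<rho> q'"
    then have "\<tau> (ev K q) = \<tau> (ev K q')" using \<rho> by auto
    then have "\<sigma> (\<tau> (ev K q)) = \<sigma> (\<tau> (ev K q'))" by simp
    then have "ev K q = ev K q'" using \<tau>1[of "ev K q", simplified] \<tau>1[of "ev K q'", simplified] by simp
    then have "ev K q ! q = ev K q' ! q" by simp
    then show "q = q'" using q by (simp add: ev_def)
  qed
  have "\<rho> ` {..<K} \<subseteq> {..<K}" using \<rho> by auto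
  then have "\<rho> ` {..<K} = {..<K}" using endo_inj_surj injr by blast
  then have "bij_betw \<rho> {..<K} {..<K}" using injr by (simp add: bij_betw_def)
  then have "\<rho> permutes {..<K}" by (rule bij_imp_permutes) (simp add: \<rho>_def)
  then show ?thesis using rep KK by blast
qed

lemma sq_mor_iso:
  assumes bij: "bij_betw \<sigma> (cube K) (cube K')"
    and ord: "\<forall>a\<in>cube K. \<forall>b\<in>cube K. cube_le a b \<longleftrightarrow> cube_le (\<sigma> a) (\<sigma> b)"
  shows "sq_mor C K K' \<sigma>"
proof (cases "C = Boxplus")
  case True
  have bp: "boxplus_mor K K' \<sigma>"
  proof (rule boxplus_I)
    show cm: "cmap K K' \<sigma>"
      using bij ord by (intro cmapI) (auto dest: bij_betw_apply)
    fix x z assume xz: "length x = K" "length z = K" "cube_le x z"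
    have "\<sigma> ` cube_interval K x z = cube_interval K' (\<sigma> x) (\<sigma> z)"
    proof (rule set_eqI, rule iffI)
      fix y' assume "y' \<in> \<sigma> ` cube_interval K x z"
      then show "y' \<in> cube_interval K' (\<sigma> x) (\<sigma> z)"
        using ord xz cm by (auto simp: cube_interval_def cmapD)
    next
      fix y' assume y': "y' \<in> cube_interval K' (\<sigma> x) (\<sigma> z)"
      define y where "y = inv_into (cube K) \<sigma> y'"
      have y'c: "y' \<in> cube K'" using y' by (simp add: cube_interval_def)
      have y: "y \<in> cube K" "\<sigma> y = y'"
        unfolding y_def by (rule bij_betw_apply[OF bij_betw_inv_into[OF bij] y'c], rule bij_betw_inv_into_right[OF bij y'c])
      then have "y \<in> cube_interval K x z" using ord xz y' by (auto simp: cube_interval_def)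
      then show "y' \<in> \<sigma> ` cube_interval K x z" using y by blast
    qed
    then show "\<exists>u v. length u = K' \<and> length v = K' \<and> cube_le u v \<and> \<sigma> ` cube_interval K x z = cube_interval K' u v"
      using xz cm ord by (intro exI conjI) (auto simp: cmapD)
  qed
  then show ?thesis using True by (simp add: sq_mor_def)
next
  case False
  have G: "(2,2,tau) \<in> gens C" using False by (cases C) (auto simp: gens_def)
  obtain \<rho> where "K' = K" "\<rho> permutes {..<K}" "\<forall>y\<in>cube K. \<sigma> y = pm K \<rho> y"
    using iso_perm[OF bij ord] by blast
  then have "dmor (gens C) K K' \<sigma>" using dmor_perm[OF G] dm_ext by metis
  then show ?thesis using False by (simp add: sq_mor_def)
qed



definition flat :: "nat \<Rightarrow> (nat \<Rightarrow> bool list) \<Rightarrow> bool list" where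
  "flat k c = concat (map c [0..<Suc k])"

definition unf :: "nat \<Rightarrow> nat \<Rightarrow> bool list \<Rightarrow> (nat \<Rightarrow> bool list)" where
  "unf k m l = restrict (\<lambda>i. take m (drop (i*m) l)) {..k}"

definition thin :: "nat \<Rightarrow> (nat \<Rightarrow> bool list) \<Rightarrow> (nat \<Rightarrow> bool list) \<Rightarrow> bool" where
  "thin k x z \<longleftrightarrow> (\<forall>i<k. cube_le (z i) (x (Suc i)))"

lemma concat_len: "(\<forall>i<r. length (g i) = m) \<Longrightarrow> length (concat (map g [0..<r])) = r * m"
  by (induction r) auto

lemma concat_block: "(\<forall>i<r. length (g i) = m) \<Longrightarrow> i < r \<Longrightarrow> take m (drop (i*m) (concat (map g [0..<r]))) = g i"
proof (induction r)
  case 0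
  then show ?case by simp
next
  case (Suc r)
  have A: "length (concat (map g [0..<r])) = r * m" using Suc.prems by (intro concat_len) auto
  show ?case
  proof (cases "i < r")
    case True
    have "i * m + m \<le> r * m" using True by (metis add.commute mult_Suc mult_le_mono1 Suc_leI)
    then have "take m (drop (i*m) (concat (map g [0..<r]) @ g r)) = take m (drop (i*m) (concat (map g [0..<r])))"
      using A by simp
    then show ?thesis using Suc True by simp
  next
    case False
    then have "i = r" using Suc.prems by simp
    then show ?thesis using A Suc.prems by simp
  qed
qed

lemma concat_take: "concat (map (\<lambda>i. take m (drop (i*m) l)) [0..<r]) = take (r*m) l"
proof (induction r)
  case 0
  then show ?case by simp
next
  case (Suc r)
  have e: "Suc r * m = r * m + m" by simp
  have B: "take (Suc r * m) l = take (r * m) l @ take m (drop (r*m) l)"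
    unfolding e by (rule take_add)
  have A: "concat (map (\<lambda>i. take m (drop (i*m) l)) [0..<Suc r]) = concat (map (\<lambda>i. take m (drop (i*m) l)) [0..<r]) @ take m (drop (r*m) l)"
    by simp
  show ?case by (simp only: A B Suc.IH)
qed

lemma concat_le: "(\<forall>i<r. length (g i) = m \<and> length (h i) = m) \<Longrightarrow>
   cube_le (concat (map g [0..<r])) (concat (map h [0..<r])) \<longleftrightarrow> (\<forall>i<r. cube_le (g i) (h i))"
proof (induction r)
  case 0
  then show ?case by simp
next
  case (Suc r)
  have "length (concat (map g [0..<r])) = length (concat (map h [0..<r]))"
    using Suc.prems concat_len[of r g m] concat_len[of r h m] by simp
  then have "cube_le (concat (map g [0..<Suc r])) (concat (map h [0..<Suc r])) \<longleftrightarrow>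
     cube_le (concat (map g [0..<r])) (concat (map h [0..<r])) \<and> cube_le (g r) (h r)"
    by (simp add: cube_le_append)
  also have "\<dots> \<longleftrightarrow> (\<forall>i<Suc r. cube_le (g i) (h i))"
    using Suc by (auto simp: less_Suc_eq)
  finally show ?case .
qed

lemma chains_iff: "c \<in> chains k (cube m) cube_le \<longleftrightarrow> c \<in> extensional {..k} \<and> (\<forall>i\<le>k. length (c i) = m) \<and>
   (\<forall>i j. i \<le> j \<and> j \<le> k \<longrightarrow> cube_le (c i) (c j))"
  by (auto simp: chains_def PiE_iff)

lemma chain_consec: "(\<forall>i<k. cube_le (c i) (c (Suc i))) \<Longrightarrow> i \<le> j \<Longrightarrow> j \<le> k \<Longrightarrow> cube_le (c i) (c j)"
proof (induction j)
  case 0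
  then show ?case by simp
next
  case (Suc j)
  then show ?case
    by (cases "i = Suc j") (auto intro: cube_le_trans)
qed

lemma flat_len: "c \<in> chains k (cube m) cube_le \<Longrightarrow> length (flat k c) = Suc k * m"
  unfolding flat_def by (rule concat_len) (auto simp: chains_iff)

lemma flat_le: "c \<in> chains k (cube m) cube_le \<Longrightarrow> d \<in> chains k (cube m) cube_le \<Longrightarrow>
  chain_le k cube_le c d \<longleftrightarrow> cube_le (flat k c) (flat k d)"
  unfolding flat_def chain_le_def
  by (subst concat_le[where m = m]) (auto simp: chains_iff less_Suc_eq_le)

lemma unf_flat: "c \<in> chains k (cube m) cube_le \<Longrightarrow> unf k m (flat k c) = c"
proof (rule ext)
  fix i assume c: "c \<in> chains k (cube m) cube_le"
  show "unf k m (flat k c) i = c i"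
  proof (cases "i \<le> k")
    case True
    have "take m (drop (i*m) (concat (map c [0..<Suc k]))) = c i"
      by (rule concat_block) (use c True in \<open>auto simp: chains_iff\<close>)
    then show ?thesis using True by (simp add: unf_def flat_def)
  next
    case False
    then show ?thesis using c by (auto simp: unf_def chains_iff extensional_def)
  qed
qed

lemma flat_unf: "length l = Suc k * m \<Longrightarrow> flat k (unf k m l) = l"
proof -
  assume l: "length l = Suc k * m"
  have "flat k (unf k m l) = concat (map (\<lambda>i. take m (drop (i*m) l)) [0..<Suc k])"
    unfolding flat_def unf_def by (intro arg_cong[where f = concat] map_cong) auto
  also have "\<dots> = l" using l by (simp add: concat_take)
  finally show ?thesis .
qed

lemma unf_len: "length l = Suc k * m \<Longrightarrow> i \<le> k \<Longrightarrow> length (unf k m l i) = m"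
proof -
  assume a: "length l = Suc k * m" "i \<le> k"
  have b: "i * m \<le> k * m" using a(2) by (simp add: mult_le_mono1)
  have "m \<le> m + k * m - i * m" using b by linarith
  then have "min (m + k * m - i * m) m = m" by (rule min.absorb2)
  then show ?thesis using a by (simp add: unf_def)
qed

definition Pch :: "nat \<Rightarrow> nat \<Rightarrow> (nat \<Rightarrow> bool list) set" where
  "Pch k m = chains k (cube m) cube_le"

definition Jint :: "nat \<Rightarrow> nat \<Rightarrow> (nat \<Rightarrow> bool list) \<Rightarrow> (nat \<Rightarrow> bool list) \<Rightarrow> (nat \<Rightarrow> bool list) set" where
  "Jint k m x z = interval (Pch k m) (chain_le k cube_le) x z"

lemma flat_J: assumes "x \<in> Pch k m" "z \<in> Pch k m" "c \<in> Jint k m x z"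
  shows "flat k c \<in> cube_interval (Suc k * m) (flat k x) (flat k z)"
  using assms by (auto simp: Jint_def interval_def Pch_def cube_interval_def flat_len flat_le[symmetric])

lemma unf_J: assumes x: "x \<in> Pch k m" and z: "z \<in> Pch k m" and th: "thin k x z"
  and l: "l \<in> cube_interval (Suc k * m) (flat k x) (flat k z)"
  shows "unf k m l \<in> Jint k m x z"
proof -
  have ll: "length l = Suc k * m" using l by (simp add: cube_interval_def)
  let ?c = "unf k m l"
  have fc: "flat k ?c = l" using ll by (rule flat_unf)
  have lens: "\<forall>i\<le>k. length (?c i) = m" using ll unf_len by blast
  have ext: "?c \<in> extensional {..k}" by (simp add: unf_def)
  have xc: "\<forall>i\<le>k. cube_le (x i) (?c i)"
  proof -
    have "cube_le (flat k x) (flat k ?c)" using l fc by (simp add: cube_interval_def)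
    then show ?thesis unfolding flat_def using x lens
      by (subst (asm) concat_le[where m = m]) (auto simp: Pch_def chains_iff less_Suc_eq_le)
  qed
  have cz: "\<forall>i\<le>k. cube_le (?c i) (z i)"
  proof -
    have "cube_le (flat k ?c) (flat k z)" using l fc by (simp add: cube_interval_def)
    then show ?thesis unfolding flat_def using z lens
      by (subst (asm) concat_le[where m = m]) (auto simp: Pch_def chains_iff less_Suc_eq_le)
  qed
  have cons: "\<forall>i<k. cube_le (?c i) (?c (Suc i))"
  proof (intro allI impI)
    fix i assume i: "i < k"
    have "cube_le (?c i) (z i)" using cz i by simp
    moreover have "cube_le (z i) (x (Suc i))" using th i by (simp add: thin_def)
    ultimately have "cube_le (?c i) (x (Suc i))" by (rule cube_le_trans)
    then show "cube_le (?c i) (?c (Suc i))" using xc i cube_le_trans by (meson Suc_leI)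
  qed
  have "?c \<in> Pch k m" unfolding Pch_def chains_iff using ext lens cons chain_consec by blast
  then show ?thesis using xc cz by (simp add: Jint_def interval_def chain_le_def)
qed

definition kap :: "nat \<Rightarrow> (nat \<Rightarrow> bool list) \<Rightarrow> (nat \<Rightarrow> bool list) \<Rightarrow> (nat \<Rightarrow> bool list) \<Rightarrow> bool list" where
  "kap k x z c = rd (flat k x) (flat k z) (flat k c)"

lemma kap_iso:
  assumes x: "x \<in> Pch k m" and z: "z \<in> Pch k m" and xz: "chain_le k cube_le x z" and th: "thin k x z"
  shows "bij_betw (kap k x z) (Jint k m x z) (cube (nd (flat k x) (flat k z)))"
    and "\<forall>a\<in>Jint k m x z. \<forall>b\<in>Jint k m x z. chain_le k cube_le a b \<longleftrightarrow> cube_le (kap k x z a) (kap k x z b)"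
    and "\<forall>c\<in>Jint k m x z. unf k m (fill (flat k x) (flat k z) (kap k x z c)) = c"
proof -
  let ?N = "Suc k * m"
  have lx: "length (flat k x) = ?N" and lz: "length (flat k z) = ?N"
    using x z by (auto simp: Pch_def flat_len)
  have fxz: "cube_le (flat k x) (flat k z)" using x z xz by (simp add: Pch_def flat_le)
  have inv1: "\<forall>c\<in>Jint k m x z. unf k m (fill (flat k x) (flat k z) (kap k x z c)) = c"
  proof
    fix c assume c: "c \<in> Jint k m x z"
    have "flat k c \<in> cube_interval ?N (flat k x) (flat k z)" using flat_J[OF x z c] .
    then have "fill (flat k x) (flat k z) (kap k x z c) = flat k c"
      by (simp add: kap_def cube_interval_def fill_rd)
    then show "unf k m (fill (flat k x) (flat k z) (kap k x z c)) = c"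
      using c unf_flat by (simp add: Jint_def interval_def Pch_def)
  qed
  then show "\<forall>c\<in>Jint k m x z. unf k m (fill (flat k x) (flat k z) (kap k x z c)) = c" .
  have fillJ: "\<And>v. length v = nd (flat k x) (flat k z) \<Longrightarrow> fill (flat k x) (flat k z) v \<in> cube_interval ?N (flat k x) (flat k z)"
    using fill_between[OF fxz] lx lz by (simp add: cube_interval_def length_fill)
  show "bij_betw (kap k x z) (Jint k m x z) (cube (nd (flat k x) (flat k z)))"
  proof (rule bij_betw_byWitness[where f' = "\<lambda>v. unf k m (fill (flat k x) (flat k z) v)"])
    show "\<forall>c\<in>Jint k m x z. unf k m (fill (flat k x) (flat k z) (kap k x z c)) = c" using inv1 .
    show "\<forall>v\<in>cube (nd (flat k x) (flat k z)). kap k x z (unf k m (fill (flat k x) (flat k z) v)) = v"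
    proof
      fix v assume v: "v \<in> cube (nd (flat k x) (flat k z))"
      have "flat k (unf k m (fill (flat k x) (flat k z) v)) = fill (flat k x) (flat k z) v"
        using lx lz by (intro flat_unf) (simp add: length_fill)
      then show "kap k x z (unf k m (fill (flat k x) (flat k z) v)) = v"
        using v lx lz by (simp add: kap_def rd_fill)
    qed
    show "kap k x z ` Jint k m x z \<subseteq> cube (nd (flat k x) (flat k z))"
    proof
      fix w assume "w \<in> kap k x z ` Jint k m x z"
      then obtain c where c: "c \<in> Jint k m x z" "w = kap k x z c" by blast
      then show "w \<in> cube (nd (flat k x) (flat k z))"
        using flat_J[OF x z c(1)] lx lz by (simp add: kap_def length_rd cube_interval_def)
    qed
    show "(\<lambda>v. unf k m (fill (flat k x) (flat k z) v)) ` cube (nd (flat k x) (flat k z)) \<subseteq> Jint k m x z"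
      using fillJ unf_J[OF x z th] by auto
  qed
  show "\<forall>a\<in>Jint k m x z. \<forall>b\<in>Jint k m x z. chain_le k cube_le a b \<longleftrightarrow> cube_le (kap k x z a) (kap k x z b)"
  proof (intro ballI)
    fix a b assume a: "a \<in> Jint k m x z" and b: "b \<in> Jint k m x z"
    have fa: "flat k a \<in> cube_interval ?N (flat k x) (flat k z)" using flat_J[OF x z a] .
    have fb: "flat k b \<in> cube_interval ?N (flat k x) (flat k z)" using flat_J[OF x z b] .
    have "chain_le k cube_le a b \<longleftrightarrow> cube_le (flat k a) (flat k b)"
      using a b by (intro flat_le) (auto simp: Jint_def interval_def Pch_def)
    also have "\<dots> \<longleftrightarrow> cube_le (kap k x z a) (kap k x z b)"
    proof
      assume "cube_le (flat k a) (flat k b)"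
      then show "cube_le (kap k x z a) (kap k x z b)" by (simp add: kap_def rd_mono)
    next
      assume "cube_le (kap k x z a) (kap k x z b)"
      then have "cube_le (fill (flat k x) (flat k z) (kap k x z a)) (fill (flat k x) (flat k z) (kap k x z b))"
        using lx lz by (intro fill_mono) auto
      moreover have "fill (flat k x) (flat k z) (kap k x z a) = flat k a" "fill (flat k x) (flat k z) (kap k x z b) = flat k b"
        using fa fb by (auto simp: kap_def cube_interval_def fill_rd)
      ultimately show "cube_le (flat k a) (flat k b)" by simp
    qed
    finally show "chain_le k cube_le a b \<longleftrightarrow> cube_le (kap k x z a) (kap k x z b)" .
  qed
qed



lemma chainD: "c \<in> Pch k m \<Longrightarrow> i \<le> k \<Longrightarrow> length (c i) = m"
  "c \<in> Pch k m \<Longrightarrow> i \<le> j \<Longrightarrow> j \<le> k \<Longrightarrow> cube_le (c i) (c j)"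
  "c \<in> Pch k m \<Longrightarrow> c \<in> extensional {..k}"
  by (auto simp: Pch_def chains_iff)

lemma JD: "c \<in> Jint k m x z \<Longrightarrow> c \<in> Pch k m \<and> chain_le k cube_le x c \<and> chain_le k cube_le c z"
  by (simp add: Jint_def interval_def)

lemma cube_le_nthD: "cube_le a b \<Longrightarrow> j < length a \<Longrightarrow> a ! j \<Longrightarrow> b ! j"
  by (auto simp: cube_le_nth)

lemma chain_le_nthD: "chain_le k cube_le a b \<Longrightarrow> i \<le> k \<Longrightarrow> a \<in> Pch k m \<Longrightarrow> j < m \<Longrightarrow> a i ! j \<Longrightarrow> b i ! j"
  by (auto simp: chain_le_def cube_le_nth chainD)

lemma chain_nth_mono: assumes "c \<in> Pch k m" "i1 \<le> i2" "i2 \<le> k" "q < m" "c i1 ! q" shows "c i2 ! q"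
proof -
  have "cube_le (c i1) (c i2)" using chainD(2)[OF assms(1-3)] .
  moreover have "length (c i1) = m" using chainD(1)[OF assms(1)] assms(2,3) by simp
  ultimately show ?thesis using cube_le_nthD assms(4,5) by auto
qed

lemma mk_chain:
  assumes "\<forall>i\<le>k. length (c i) = m" "\<forall>i j. i \<le> j \<and> j \<le> k \<longrightarrow> (\<forall>q<m. c i ! q \<longrightarrow> c j ! q)"
  shows "restrict c {..k} \<in> Pch k m"
  using assms by (auto simp: Pch_def chains_iff cube_le_nth)

lemma bool_thin:
  assumes x: "x \<in> Pch k m" and z: "z \<in> Pch k m" and xz: "chain_le k cube_le x z"
    and bij: "bij_betw \<iota> (Jint k m x z) (cube K)"
    and ord: "\<forall>a\<in>Jint k m x z. \<forall>b\<in>Jint k m x z. chain_le k cube_le a b \<longleftrightarrow> cube_le (\<iota> a) (\<iota> b)"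
  shows "thin k x z"
  unfolding thin_def
proof (intro allI impI)
  fix i assume ik: "i < k"
  show "cube_le (z i) (x (Suc i))"
  proof (rule ccontr)
    assume nle: "\<not> cube_le (z i) (x (Suc i))"
    have lz: "length (z i) = m" and lx: "length (x (Suc i)) = m" using x z ik chainD by auto
    obtain j where j: "j < m" "z i ! j" "\<not> x (Suc i) ! j"
      using nle lz lx unfolding cube_le_nth by auto
    have xm: "\<And>i1 i2 q. i1 \<le> i2 \<Longrightarrow> i2 \<le> k \<Longrightarrow> q < m \<Longrightarrow> x i1 ! q \<Longrightarrow> x i2 ! q"
      using chain_nth_mono[OF x] by blast
    have zm: "\<And>i1 i2 q. i1 \<le> i2 \<Longrightarrow> i2 \<le> k \<Longrightarrow> q < m \<Longrightarrow> z i1 ! q \<Longrightarrow> z i2 ! q"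
      using chain_nth_mono[OF z] by blast
    have xzm: "\<And>i1 q. i1 \<le> k \<Longrightarrow> q < m \<Longrightarrow> x i1 ! q \<Longrightarrow> z i1 ! q"
      using xz x chain_le_nthD by blast
    have lxs: "\<And>i1. i1 \<le> k \<Longrightarrow> length (x i1) = m" using x chainD by blast
    have lzs: "\<And>i1. i1 \<le> k \<Longrightarrow> length (z i1) = m" using z chainD by blast
    define y0 where "y0 = (\<lambda>i'. (x i')[j := x i' ! j \<or> (i < i' \<and> z i' ! j)])"
    define y where "y = restrict y0 {..k}"
    have y0n: "\<And>i' q. i' \<le> k \<Longrightarrow> q < m \<Longrightarrow> y0 i' ! q = (if q = j then x i' ! j \<or> (i < i' \<and> z i' ! j) else x i' ! q)"
      using lxs j(1) by (simp add: y0_def nth_list_update)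
    have y0l: "\<And>i'. i' \<le> k \<Longrightarrow> length (y0 i') = m" using lxs by (simp add: y0_def)
    have yP: "y \<in> Pch k m" unfolding y_def
    proof (rule mk_chain)
      show "\<forall>i'\<le>k. length (y0 i') = m" using y0l by blast
      show "\<forall>i1 i2. i1 \<le> i2 \<and> i2 \<le> k \<longrightarrow> (\<forall>q<m. y0 i1 ! q \<longrightarrow> y0 i2 ! q)"
        using y0n xm zm by (auto split: if_splits)
    qed
    have yJ: "y \<in> Jint k m x z"
      unfolding Jint_def interval_def
      using yP x z y0n y0l xzm lxs lzs
      by (auto simp: Pch_def y_def chain_le_def cube_le_nth)
    let ?J = "Jint k m x z"
    define ii where "ii = inv_into ?J \<iota>"
    have iiJ: "\<And>v. v \<in> cube K \<Longrightarrow> ii v \<in> ?J \<and> \<iota> (ii v) = v"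
      unfolding ii_def using bij by (metis bij_betw_apply bij_betw_inv_into bij_betw_inv_into_right)
    have inj: "\<And>a b. a \<in> ?J \<Longrightarrow> b \<in> ?J \<Longrightarrow> \<iota> a = \<iota> b \<Longrightarrow> a = b"
      using bij by (metis bij_betw_inv_into_left)
    have ilen: "\<And>a. a \<in> ?J \<Longrightarrow> length (\<iota> a) = K" using bij bij_betw_apply by fastforce
    define w where "w = ii (map Not (\<iota> y))"
    have wJ: "w \<in> ?J" and iw: "\<iota> w = map Not (\<iota> y)"
      using iiJ[of "map Not (\<iota> y)"] ilen[OF yJ] by (auto simp: w_def)
    have wP: "w \<in> Pch k m" using wJ JD by blast
    have xJ: "x \<in> ?J" and zJ: "z \<in> ?J"
      using x z xz by (auto simp: Jint_def interval_def chain_le_def)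
    have lws: "\<And>i1. i1 \<le> k \<Longrightarrow> length (w i1) = m" using wP chainD by blast
    have lys: "\<And>i1. i1 \<le> k \<Longrightarrow> length (y i1) = m" using yP chainD by blast
    have wm: "\<And>i1 i2 q. i1 \<le> i2 \<Longrightarrow> i2 \<le> k \<Longrightarrow> q < m \<Longrightarrow> w i1 ! q \<Longrightarrow> w i2 ! q"
      using wP chainD by (metis cube_le_nthD le_trans)
    have ym: "\<And>i1 i2 q. i1 \<le> i2 \<Longrightarrow> i2 \<le> k \<Longrightarrow> q < m \<Longrightarrow> y i1 ! q \<Longrightarrow> y i2 ! q"
      using yP chainD by (metis cube_le_nthD le_trans)
    have xw: "\<And>i1 q. i1 \<le> k \<Longrightarrow> q < m \<Longrightarrow> x i1 ! q \<Longrightarrow> w i1 ! q"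
      using wJ JD x chain_le_nthD by blast
    have wz: "\<And>i1 q. i1 \<le> k \<Longrightarrow> q < m \<Longrightarrow> w i1 ! q \<Longrightarrow> z i1 ! q"
      using wJ JD wP chain_le_nthD by blast
    have xy: "\<And>i1 q. i1 \<le> k \<Longrightarrow> q < m \<Longrightarrow> x i1 ! q \<Longrightarrow> y i1 ! q"
      using yJ JD x chain_le_nthD by blast
    have yz: "\<And>i1 q. i1 \<le> k \<Longrightarrow> q < m \<Longrightarrow> y i1 ! q \<Longrightarrow> z i1 ! q"
      using yJ JD yP chain_le_nthD by blast
    define u1 where "u1 = restrict (\<lambda>i'. map (\<lambda>q. y i' ! q \<and> w i' ! q) [0..<m]) {..k}"
    have u1P: "u1 \<in> Pch k m" unfolding u1_def
      by (rule mk_chain) (use ym wm in auto)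
    have u1n: "\<And>i' q. i' \<le> k \<Longrightarrow> q < m \<Longrightarrow> u1 i' ! q = (y i' ! q \<and> w i' ! q)"
      by (simp add: u1_def)
    have u1J: "u1 \<in> ?J" unfolding Jint_def interval_def
      using u1P u1n xy xw yz lxs lzs by (auto simp: chain_le_def cube_le_nth u1_def)
    have u1y: "chain_le k cube_le u1 y" using u1n lys by (auto simp: chain_le_def cube_le_nth u1_def)
    have u1w: "chain_le k cube_le u1 w" using u1n lws by (auto simp: chain_le_def cube_le_nth u1_def)
    have a1: "cube_le (\<iota> u1) (\<iota> y)" "cube_le (\<iota> u1) (\<iota> w)" using ord u1J yJ wJ u1y u1w by auto
    have f1: "\<forall>q<K. \<not> \<iota> u1 ! q" using a1 iw ilen[OF u1J] ilen[OF yJ] by (auto simp: cube_le_nth)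
    have "chain_le k cube_le x u1" using JD[OF u1J] by blast
    then have "cube_le (\<iota> x) (\<iota> u1)" using ord xJ u1J by blast
    then have "\<forall>q<K. \<not> \<iota> x ! q" using f1 ilen[OF xJ] by (auto simp: cube_le_nth)
    then have "\<iota> x = \<iota> u1" using f1 ilen[OF xJ] ilen[OF u1J] by (intro nth_equalityI) auto
    then have xu1: "x = u1" using inj xJ u1J by blast
    define u2 where "u2 = restrict (\<lambda>i'. map (\<lambda>q. y i' ! q \<or> w i' ! q) [0..<m]) {..k}"
    have u2P: "u2 \<in> Pch k m" unfolding u2_def
      by (rule mk_chain) (use ym wm in auto)
    have u2n: "\<And>i' q. i' \<le> k \<Longrightarrow> q < m \<Longrightarrow> u2 i' ! q = (y i' ! q \<or> w i' ! q)"
      by (simp add: u2_def)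
    have u2J: "u2 \<in> ?J" unfolding Jint_def interval_def
      using u2P u2n xy yz wz lxs lzs by (auto simp: chain_le_def cube_le_nth u2_def)
    have u2y: "chain_le k cube_le y u2" using u2n lys by (auto simp: chain_le_def cube_le_nth u2_def)
    have u2w: "chain_le k cube_le w u2" using u2n lws by (auto simp: chain_le_def cube_le_nth u2_def)
    have a2: "cube_le (\<iota> y) (\<iota> u2)" "cube_le (\<iota> w) (\<iota> u2)" using ord u2J yJ wJ u2y u2w by auto
    have f2: "\<forall>q<K. \<iota> u2 ! q" using a2 iw ilen[OF u2J] ilen[OF yJ] by (auto simp: cube_le_nth)
    have "chain_le k cube_le u2 z" using JD[OF u2J] by blast
    then have "cube_le (\<iota> u2) (\<iota> z)" using ord zJ u2J by blast
    then have "\<forall>q<K. \<iota> z ! q" using f2 ilen[OF zJ] ilen[OF u2J] by (auto simp: cube_le_nth)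
    then have "\<iota> z = \<iota> u2" using f2 ilen[OF zJ] ilen[OF u2J] by (intro nth_equalityI) auto
    then have zu2: "z = u2" using inj zJ u2J by blast
    have ik': "i \<le> k" "Suc i \<le> k" using ik by auto
    have "\<not> x i ! j" using xm[of i "Suc i" j] ik' j by auto
    then have "\<not> y i ! j" using y0n[OF ik'(1) j(1)] by (simp add: y_def ik'(1))
    moreover have "u2 i ! j" using zu2 j by simp
    ultimately have "w i ! j" using u2n[OF ik'(1) j(1)] by simp
    then have "w (Suc i) ! j" using wm[of i "Suc i" j] ik' j by simp
    moreover have "z (Suc i) ! j" using zm[of i "Suc i" j] ik' j by simp
    then have "y (Suc i) ! j" using y0n[OF ik'(2) j(1)] by (simp add: y_def ik'(2))
    ultimately have "u1 (Suc i) ! j" using u1n[OF ik'(2) j(1)] by simp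
    then show False using xu1 j by simp
  qed
qed



lemma transfer:
  assumes sqm: "sq_mor C (Suc k * m) (Suc k' * n) \<Phi>"
    and fPQ: "\<forall>c\<in>Pch k m. f c \<in> Pch k' n"
    and fmono: "\<forall>c\<in>Pch k m. \<forall>d\<in>Pch k m. chain_le k cube_le c d \<longrightarrow> chain_le k' cube_le (f c) (f d)"
    and fflat: "\<forall>c\<in>Pch k m. flat k' (f c) = \<Phi> (flat k c)"
    and fthin: "\<forall>x\<in>Pch k m. \<forall>z\<in>Pch k m. chain_le k cube_le x z \<longrightarrow> thin k x z \<longrightarrow> thin k' (f x) (f z)"
    and th: "\<theta> \<in> sq_set C (Pch k m) (chain_le k cube_le) nn"
  shows "restrict (f \<circ> \<theta>) (cube nn) \<in> sq_set C (Pch k' n) (chain_le k' cube_le) nn"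
proof -
  have thn: "\<theta> \<in> ner (Pch k m) (chain_le k cube_le) nn" using th by (simp add: sq_set_def)
  obtain x z K \<iota> where x: "x \<in> Pch k m" and z: "z \<in> Pch k m" and xz: "chain_le k cube_le x z"
    and bij: "bij_betw \<iota> (Jint k m x z) (cube K)"
    and ord: "\<forall>a\<in>Jint k m x z. \<forall>b\<in>Jint k m x z. chain_le k cube_le a b \<longleftrightarrow> cube_le (\<iota> a) (\<iota> b)"
    and im: "\<theta> ` cube nn \<subseteq> Jint k m x z"
    and sm: "sq_mor C nn K (\<iota> \<circ> \<theta>)"
    using th unfolding sq_set_def Jint_def mem_Collect_eq by (elim conjE bexE exE) blast
  have thx: "thin k x z" by (rule bool_thin[OF x z xz bij ord])
  let ?x' = "f x" and ?z' = "f z"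
  have x': "?x' \<in> Pch k' n" and z': "?z' \<in> Pch k' n" using fPQ x z by auto
  have xz': "chain_le k' cube_le ?x' ?z'" using fmono x z xz by blast
  have thx': "thin k' ?x' ?z'" using fthin x z xz thx by blast
  note K1 = kap_iso[OF x z xz thx]
  note K2 = kap_iso[OF x' z' xz' thx']
  let ?d = "nd (flat k x) (flat k z)"
  let ?d' = "nd (flat k' ?x') (flat k' ?z')"
  let ?F = "restrict (f \<circ> \<theta>) (cube nn)"
  have thP: "\<And>w. w \<in> cube nn \<Longrightarrow> \<theta> w \<in> Jint k m x z" using im by blast
  have thPP: "\<And>w. w \<in> cube nn \<Longrightarrow> \<theta> w \<in> Pch k m" using thP JD by blast
  have ner': "?F \<in> ner (Pch k' n) (chain_le k' cube_le) nn"
  proof -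
    have "?F \<in> cube nn \<rightarrow>\<^sub>E Pch k' n" using thPP fPQ by auto
    moreover have "mono_betw (cube nn) cube_le (chain_le k' cube_le) ?F"
      using thn fmono thPP unfolding ner_def mono_betw_def by auto
    ultimately show ?thesis by (simp add: ner_def)
  qed
  have im': "?F ` cube nn \<subseteq> Jint k' n ?x' ?z'"
  proof
    fix c assume "c \<in> ?F ` cube nn"
    then obtain w where w: "w \<in> cube nn" "c = f (\<theta> w)" by auto
    have "chain_le k cube_le x (\<theta> w)" "chain_le k cube_le (\<theta> w) z" using JD[OF thP[OF w(1)]] by auto
    then show "c \<in> Jint k' n ?x' ?z'"
      using w fmono fPQ thPP x z by (auto simp: Jint_def interval_def)
  qed
  have lfx: "length (flat k x) = Suc k * m" "length (flat k z) = Suc k * m"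
    using x z by (auto simp: Pch_def flat_len)
  have fxz: "cube_le (flat k x) (flat k z)" using x z xz by (simp add: Pch_def flat_le)
  have A: "sq_mor C ?d ?d' (rs \<Phi> (flat k x) (flat k z))"
    using sq_mor_rs[OF sqm lfx fxz] fflat x z by simp
  define ii where "ii = inv_into (Jint k m x z) \<iota>"
  have iibij: "bij_betw ii (cube K) (Jint k m x z)" unfolding ii_def using bij by (rule bij_betw_inv_into)
  have iiJ: "\<And>v. v \<in> cube K \<Longrightarrow> ii v \<in> Jint k m x z \<and> \<iota> (ii v) = v"
    unfolding ii_def using bij by (metis bij_betw_apply bij_betw_inv_into bij_betw_inv_into_right)
  have Sb: "bij_betw (kap k x z \<circ> ii) (cube K) (cube ?d)"
      by (rule bij_betw_trans[OF iibij K1(1)])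
  have So: "\<forall>a\<in>cube K. \<forall>b\<in>cube K. cube_le a b \<longleftrightarrow> cube_le ((kap k x z \<circ> ii) a) ((kap k x z \<circ> ii) b)"
    proof (intro ballI)
      fix a b assume a: "a \<in> cube K" and b: "b \<in> cube K"
      have "cube_le a b \<longleftrightarrow> cube_le (\<iota> (ii a)) (\<iota> (ii b))" using iiJ a b by simp
      also have "\<dots> \<longleftrightarrow> chain_le k cube_le (ii a) (ii b)" using ord iiJ a b by simp
      also have "\<dots> \<longleftrightarrow> cube_le (kap k x z (ii a)) (kap k x z (ii b))" using K1(2) iiJ a b by simp
      finally show "cube_le a b \<longleftrightarrow> cube_le ((kap k x z \<circ> ii) a) ((kap k x z \<circ> ii) b)" by simp
    qed
  have S: "sq_mor C K ?d (kap k x z \<circ> ii)" by (rule sq_mor_iso[OF Sb So])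
  have comp: "sq_mor C nn ?d' (rs \<Phi> (flat k x) (flat k z) \<circ> ((kap k x z \<circ> ii) \<circ> (\<iota> \<circ> \<theta>)))"
    by (rule sq_mor_comp[OF sq_mor_comp[OF sm S] A])
  have eq: "\<forall>w\<in>cube nn. (kap k' ?x' ?z' \<circ> ?F) w = (rs \<Phi> (flat k x) (flat k z) \<circ> ((kap k x z \<circ> ii) \<circ> (\<iota> \<circ> \<theta>))) w"
  proof
    fix w assume w: "w \<in> cube nn"
    have iiw: "ii (\<iota> (\<theta> w)) = \<theta> w" unfolding ii_def
      using bij thP[OF w] by (simp add: bij_betw_inv_into_left)
    have fl: "flat k (\<theta> w) \<in> cube_interval (Suc k * m) (flat k x) (flat k z)" using flat_J[OF x z thP[OF w]] .
    have "(rs \<Phi> (flat k x) (flat k z) \<circ> ((kap k x z \<circ> ii) \<circ> (\<iota> \<circ> \<theta>))) w = rs \<Phi> (flat k x) (flat k z) (kap k x z (\<theta> w))"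
      using iiw by simp
    also have "\<dots> = rd (\<Phi> (flat k x)) (\<Phi> (flat k z)) (\<Phi> (flat k (\<theta> w)))"
      using fl by (simp add: rs_def kap_def cube_interval_def fill_rd)
    also have "\<dots> = kap k' ?x' ?z' (f (\<theta> w))"
      using fflat x z thPP[OF w] by (simp add: kap_def)
    finally show "(kap k' ?x' ?z' \<circ> ?F) w = (rs \<Phi> (flat k x) (flat k z) \<circ> ((kap k x z \<circ> ii) \<circ> (\<iota> \<circ> \<theta>))) w"
      using w by simp
  qed
  have fin: "sq_mor C nn ?d' (kap k' ?x' ?z' \<circ> ?F)" by (rule sq_mor_ext[OF comp eq])
  have ex: "\<exists>x\<in>Pch k' n. \<exists>z\<in>Pch k' n. \<exists>K. \<exists>\<iota> :: (nat \<Rightarrow> bool list) \<Rightarrow> bool list.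
        chain_le k' cube_le x z \<and>
        bij_betw \<iota> (interval (Pch k' n) (chain_le k' cube_le) x z) (cube K) \<and>
        (\<forall>a\<in>interval (Pch k' n) (chain_le k' cube_le) x z. \<forall>b\<in>interval (Pch k' n) (chain_le k' cube_le) x z. chain_le k' cube_le a b \<longleftrightarrow> cube_le (\<iota> a) (\<iota> b)) \<and>
        ?F ` cube nn \<subseteq> interval (Pch k' n) (chain_le k' cube_le) x z \<and>
        sq_mor C nn K (\<iota> \<circ> ?F)"
  proof (intro bexI exI conjI)
    show "chain_le k' cube_le ?x' ?z'" by (rule xz')
    show "bij_betw (kap k' ?x' ?z') (interval (Pch k' n) (chain_le k' cube_le) ?x' ?z') (cube ?d')"
      using K2(1) by (simp add: Jint_def)
    show "\<forall>a\<in>interval (Pch k' n) (chain_le k' cube_le) ?x' ?z'. \<forall>b\<in>interval (Pch k' n) (chain_le k' cube_le) ?x' ?z'. chain_le k' cube_le a b \<longleftrightarrow> cube_le (kap k' ?x' ?z' a) (kap k' ?x' ?z' b)"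
      using K2(2) by (simp add: Jint_def)
    show "?F ` cube nn \<subseteq> interval (Pch k' n) (chain_le k' cube_le) ?x' ?z'" using im' by (simp add: Jint_def)
    show "sq_mor C nn ?d' (kap k' ?x' ?z' \<circ> ?F)" by (rule fin)
  qed (use x' z' in auto)
  show ?thesis unfolding sq_set_def using ner' ex by blast
qed

lemma lift_of:
  assumes "\<And>nn \<theta>. \<theta> \<in> sq_set C P leP nn \<Longrightarrow> restrict (f \<circ> \<theta>) (cube nn) \<in> sq_set C Q leQ nn"
  shows "unique_lift C P leP Q leQ f"
  unfolding unique_lift_def
proof (rule conjI)
  let ?F = "\<lambda>nn \<theta>. restrict (f \<circ> \<theta>) (cube nn)"
  have "cset_mor C (sq_set C P leP) (sq_set C Q leQ) ?F"
    unfolding cset_mor_def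
  proof (intro conjI allI impI ballI)
    fix nn \<theta> assume "\<theta> \<in> sq_set C P leP nn"
    then show "?F nn \<theta> \<in> sq_set C Q leQ nn" by (rule assms)
  next
    fix a b \<psi> \<theta> assume \<psi>: "sq_mor C a b \<psi>"
    have "\<And>w. w \<in> cube a \<Longrightarrow> \<psi> w \<in> cube b" using sq_mor_cmap[OF \<psi>] by (simp add: cmapD)
    then show "?F a (restrict (\<theta> \<circ> \<psi>) (cube a)) = restrict (?F b \<theta> \<circ> \<psi>) (cube a)"
      by (auto simp: restrict_def fun_eq_iff)
  qed
  moreover have "commutes_with_ner (sq_set C P leP) f ?F" by (simp add: commutes_with_ner_def)
  ultimately show "\<exists>F. cset_mor C (sq_set C P leP) (sq_set C Q leQ) F \<and> commutes_with_ner (sq_set C P leP) f F"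
    by blast
next
  show "\<forall>F G. cset_mor C (sq_set C P leP) (sq_set C Q leQ) F \<and> commutes_with_ner (sq_set C P leP) f F \<and>
          cset_mor C (sq_set C P leP) (sq_set C Q leQ) G \<and> commutes_with_ner (sq_set C P leP) f G
        \<longrightarrow> (\<forall>n. \<forall>\<theta>\<in>sq_set C P leP n. F n \<theta> = G n \<theta>)"
    by (simp add: commutes_with_ner_def)
qed





definition powp :: "nat \<Rightarrow> (bool list \<Rightarrow> bool list) \<Rightarrow> nat \<Rightarrow> bool list \<Rightarrow> bool list" where
  "powp m \<phi> r l = concat (map (\<lambda>i. \<phi> (take m (drop (i*m) l))) [0..<r])"

lemma powp_Suc: "powp m \<phi> (Suc r) = (\<lambda>l. \<phi> (take m l) @ powp m \<phi> r (drop m l))"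
proof (rule ext)
  fix l
  have "powp m \<phi> (Suc r) l = concat (map (\<lambda>i. \<phi> (take m (drop (i*m) l))) (0 # map Suc [0..<r]))"
    unfolding powp_def by (simp only: upt_conv_Cons map_Suc_upt zero_less_Suc)
  also have "\<dots> = \<phi> (take m l) @ concat (map (\<lambda>i. \<phi> (take m (drop (Suc i * m) l))) [0..<r])"
    by (simp add: comp_def)
  also have "\<dots> = \<phi> (take m l) @ powp m \<phi> r (drop m l)"
    unfolding powp_def by (simp add: add.commute comp_def)
  finally show "powp m \<phi> (Suc r) l = \<phi> (take m l) @ powp m \<phi> r (drop m l)" .
qed

lemma powp_sq: "sq_mor C m n \<phi> \<Longrightarrow> sq_mor C (r * m) (r * n) (powp m \<phi> r)"
proof (induction r)
  case 0
  have "powp m \<phi> 0 = (\<lambda>xs. [])" by (simp add: powp_def fun_eq_iff)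
  then show ?case using sq_mor_term[of C 0] by simp
next
  case (Suc r)
  have "sq_mor C (m + r * m) (n + r * n) (\<lambda>xs. \<phi> (take m xs) @ powp m \<phi> r (drop m xs))"
    by (rule sq_mor_prod[OF Suc.prems Suc.IH[OF Suc.prems]])
  then show ?case by (simp add: powp_Suc)
qed

lemma post_map_props:
  assumes \<phi>: "sq_mor C m n \<phi>"
  shows "\<forall>c\<in>Pch k m. post_map k \<phi> c \<in> Pch k n"
    and "\<forall>c\<in>Pch k m. \<forall>d\<in>Pch k m. chain_le k cube_le c d \<longrightarrow> chain_le k cube_le (post_map k \<phi> c) (post_map k \<phi> d)"
    and "\<forall>c\<in>Pch k m. flat k (post_map k \<phi> c) = powp m \<phi> (Suc k) (flat k c)"
    and "\<forall>x\<in>Pch k m. \<forall>z\<in>Pch k m. chain_le k cube_le x z \<longrightarrow> thin k x z \<longrightarrow> thin k (post_map k \<phi> x) (post_map k \<phi> z)"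
proof -
  have cm: "cmap m n \<phi>" using sq_mor_cmap[OF \<phi>] .
  show "\<forall>c\<in>Pch k m. post_map k \<phi> c \<in> Pch k n"
  proof
    fix c assume c: "c \<in> Pch k m"
    show "post_map k \<phi> c \<in> Pch k n"
      unfolding Pch_def chains_iff post_map_def
      using c cm by (auto simp: chainD cmapD)
  qed
  show "\<forall>c\<in>Pch k m. \<forall>d\<in>Pch k m. chain_le k cube_le c d \<longrightarrow> chain_le k cube_le (post_map k \<phi> c) (post_map k \<phi> d)"
    using cm by (auto simp: chain_le_def post_map_def chainD cmapD)
  show "\<forall>c\<in>Pch k m. flat k (post_map k \<phi> c) = powp m \<phi> (Suc k) (flat k c)"
  proof
    fix c assume c: "c \<in> Pch k m"
    have "flat k (post_map k \<phi> c) = concat (map (\<lambda>i. \<phi> (c i)) [0..<Suc k])"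
      unfolding flat_def post_map_def by (intro arg_cong[where f = concat] map_cong) auto
    also have "\<dots> = concat (map (\<lambda>i. \<phi> (take m (drop (i*m) (flat k c)))) [0..<Suc k])"
    proof (intro arg_cong[where f = concat] map_cong refl)
      fix i assume "i \<in> set [0..<Suc k]"
      then have i: "i < Suc k" by (auto simp: less_Suc_eq)
      have lc: "\<forall>j<Suc k. length (c j) = m" using c chainD(1)[OF c] by (simp add: less_Suc_eq_le)
      have "take m (drop (i*m) (concat (map c [0..<Suc k]))) = c i" by (rule concat_block[OF lc i])
      then show "\<phi> (c i) = \<phi> (take m (drop (i*m) (flat k c)))" by (simp add: flat_def)
    qed
    finally show "flat k (post_map k \<phi> c) = powp m \<phi> (Suc k) (flat k c)" by (simp add: powp_def)
  qed
  show "\<forall>x\<in>Pch k m. \<forall>z\<in>Pch k m. chain_le k cube_le x z \<longrightarrow> thin k x z \<longrightarrow> thin k (post_map k \<phi> x) (post_map k \<phi> z)"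
    using cm by (auto simp: thin_def post_map_def chainD cmapD)
qed

theorem partA: "sq_mor C m n \<phi> \<Longrightarrow>
            unique_lift C (chains k (cube m) cube_le) (chain_le k cube_le)
                          (chains k (cube n) cube_le) (chain_le k cube_le)
                          (post_map k \<phi>)"
proof -
  assume \<phi>: "sq_mor C m n \<phi>"
  have sq: "sq_mor C (Suc k * m) (Suc k * n) (powp m \<phi> (Suc k))" by (rule powp_sq[OF \<phi>])
  note pp = post_map_props[OF \<phi>, of k]
  show ?thesis
    unfolding Pch_def[symmetric]
    by (rule lift_of, rule transfer[OF sq pp(1) pp(2) pp(3) pp(4)])
qed



fun sel :: "nat \<Rightarrow> bool list \<Rightarrow> bool list \<Rightarrow> bool list" where
  "sel n [] l = []"
| "sel n (b#bs) l = (if b then take n l else []) @ sel n bs (drop n l)"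

lemma sel_sq: "sq_mor C (length bs * n) (length (filter id bs) * n) (sel n bs)"
proof (induction bs)
  case Nil
  have "sel n [] = (\<lambda>xs. [])" by (simp add: fun_eq_iff)
  then show ?case using sq_mor_term[of C 0] by simp
next
  case (Cons b bs)
  have g: "sq_mor C n (if b then n else 0) (if b then (\<lambda>xs. xs) else (\<lambda>xs. []))"
    by (cases b) (simp_all add: sq_mor_id sq_mor_term)
  have P: "sq_mor C (n + length bs * n) ((if b then n else 0) + length (filter id bs) * n)
     (\<lambda>xs. (if b then (\<lambda>xs. xs) else (\<lambda>xs. [])) (take n xs) @ sel n bs (drop n xs))"
    by (rule sq_mor_prod[OF g Cons.IH])
  have e1: "sel n (b#bs) = (\<lambda>xs. (if b then (\<lambda>xs. xs) else (\<lambda>xs. [])) (take n xs) @ sel n bs (drop n xs))"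
    by (cases b) (simp_all add: fun_eq_iff)
  have e2: "length (b#bs) * n = n + length bs * n" by simp
  have e3: "length (filter id (b#bs)) * n = (if b then n else 0) + length (filter id bs) * n"
    by (cases b) simp_all
  show ?case unfolding e1 e2 e3 by (rule P)
qed

lemma sel_formula: "sel n bs l = concat (map (\<lambda>i. take n (drop (i*n) l)) (filter (\<lambda>i. bs!i) [0..<length bs]))"
proof (induction bs arbitrary: l)
  case Nil
  then show ?case by simp
next
  case (Cons b bs)
  have f: "filter (\<lambda>i. (b#bs)!i) [0..<length (b#bs)] = (if b then [0] else []) @ map Suc (filter (\<lambda>i. bs!i) [0..<length bs])"
  proof -
    have "[0..<length (b#bs)] = 0 # map Suc [0..<length bs]"
      by (simp only: length_Cons upt_conv_Cons map_Suc_upt zero_less_Suc)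
    then show ?thesis by (simp add: filter_map comp_def)
  qed
  have "concat (map (\<lambda>i. take n (drop (i*n) l)) (filter (\<lambda>i. (b#bs)!i) [0..<length (b#bs)]))
      = (if b then take n l else []) @ concat (map (\<lambda>i. take n (drop (i*n) (drop n l))) (filter (\<lambda>i. bs!i) [0..<length bs]))"
    unfolding f by (simp add: comp_def add.commute)
  then show ?case using Cons.IH[of "drop n l"] by simp
qed

declare upt_Suc[simp del]

lemma pre_props:
  assumes \<delta>: "\<delta> \<in> {..k1} \<rightarrow> {..k2}" and sm: "\<forall>i j. i < j \<and> j \<le> k1 \<longrightarrow> \<delta> i < \<delta> j"
    and bs_def: "bs = map (\<lambda>i. i \<in> \<delta> ` {..k1}) [0..<Suc k2]"
  shows "sq_mor C (Suc k2 * n) (Suc k1 * n) (sel n bs)"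
    and "\<forall>c\<in>Pch k2 n. pre_map k1 \<delta> c \<in> Pch k1 n"
    and "\<forall>c\<in>Pch k2 n. \<forall>d\<in>Pch k2 n. chain_le k2 cube_le c d \<longrightarrow> chain_le k1 cube_le (pre_map k1 \<delta> c) (pre_map k1 \<delta> d)"
    and "\<forall>c\<in>Pch k2 n. flat k1 (pre_map k1 \<delta> c) = sel n bs (flat k2 c)"
    and "\<forall>x\<in>Pch k2 n. \<forall>z\<in>Pch k2 n. chain_le k2 cube_le x z \<longrightarrow> thin k2 x z \<longrightarrow> thin k1 (pre_map k1 \<delta> x) (pre_map k1 \<delta> z)"
proof -
  have dk: "\<And>i. i \<le> k1 \<Longrightarrow> \<delta> i \<le> k2" using \<delta> by auto
  have dmono: "\<And>i j. i \<le> j \<Longrightarrow> j \<le> k1 \<Longrightarrow> \<delta> i \<le> \<delta> j"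
  proof -
    fix i j assume ij: "i \<le> j" "j \<le> k1"
    show "\<delta> i \<le> \<delta> j" using sm[rule_format, of i j] ij by (cases "i = j") auto
  qed
  have filt: "filter (\<lambda>i. i \<in> \<delta> ` {..k1}) [0..<Suc k2] = map \<delta> [0..<Suc k1]"
  proof (rule sorted_distinct_set_unique)
    have "sorted_wrt (<) (filter (\<lambda>i. i \<in> \<delta> ` {..k1}) [0..<Suc k2])"
      by (rule sorted_wrt_filter) (rule sorted_wrt_upt)
    then show "sorted (filter (\<lambda>i. i \<in> \<delta> ` {..k1}) [0..<Suc k2])" "distinct (filter (\<lambda>i. i \<in> \<delta> ` {..k1}) [0..<Suc k2])"
      by (simp_all add: strict_sorted_iff)
    have "sorted_wrt (\<lambda>x y. \<delta> x < \<delta> y) [0..<Suc k1]"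
      by (rule sorted_wrt_mono_rel[of _ "(<)", OF _ sorted_wrt_upt]) (use sm in auto)
    then have "sorted_wrt (<) (map \<delta> [0..<Suc k1])" by (simp only: sorted_wrt_map)
    then show "sorted (map \<delta> [0..<Suc k1])" "distinct (map \<delta> [0..<Suc k1])"
      by (simp_all add: strict_sorted_iff)
    have "set (filter (\<lambda>i. i \<in> \<delta> ` {..k1}) [0..<Suc k2]) = {i \<in> {0..<Suc k2}. i \<in> \<delta> ` {..k1}}"
      by (simp only: set_filter set_upt)
    also have "\<dots> = \<delta> ` {..k1}" using dk by (auto simp: less_Suc_eq_le)
    also have "\<dots> = set (map \<delta> [0..<Suc k1])" by (simp only: set_map set_upt atLeast0LessThan lessThan_Suc_atMost)
    finally show "set (filter (\<lambda>i. i \<in> \<delta> ` {..k1}) [0..<Suc k2]) = set (map \<delta> [0..<Suc k1])" .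
  qed
  have lbs: "length bs = Suc k2" by (simp add: bs_def)
  have fbs: "filter (\<lambda>i. bs ! i) [0..<length bs] = map \<delta> [0..<Suc k1]"
  proof -
    have "filter (\<lambda>i. bs ! i) [0..<length bs] = filter (\<lambda>i. i \<in> \<delta> ` {..k1}) [0..<Suc k2]"
      unfolding lbs by (rule filter_cong[OF refl]) (simp add: bs_def del: upt_Suc)
    then show ?thesis using filt by simp
  qed
  have "length (filter id bs) = length (filter (\<lambda>i. i \<in> \<delta> ` {..k1}) [0..<Suc k2])"
    by (simp add: bs_def filter_map comp_def)
  then have lf: "length (filter id bs) = Suc k1" using filt by simp
  show "sq_mor C (Suc k2 * n) (Suc k1 * n) (sel n bs)"
    using sel_sq[of C bs n] lbs lf by simp
  show "\<forall>c\<in>Pch k2 n. pre_map k1 \<delta> c \<in> Pch k1 n"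
  proof
    fix c assume c: "c \<in> Pch k2 n"
    show "pre_map k1 \<delta> c \<in> Pch k1 n"
      unfolding Pch_def chains_iff pre_map_def
      using c dk dmono chainD(1)[OF c] chainD(2)[OF c] by auto
  qed
  show "\<forall>c\<in>Pch k2 n. \<forall>d\<in>Pch k2 n. chain_le k2 cube_le c d \<longrightarrow> chain_le k1 cube_le (pre_map k1 \<delta> c) (pre_map k1 \<delta> d)"
    using dk by (auto simp: chain_le_def pre_map_def)
  show "\<forall>c\<in>Pch k2 n. flat k1 (pre_map k1 \<delta> c) = sel n bs (flat k2 c)"
  proof
    fix c assume c: "c \<in> Pch k2 n"
    have lc: "\<forall>j<Suc k2. length (c j) = m" if "m = n" for m using c chainD(1)[OF c] that by (simp add: less_Suc_eq_le)
    have "flat k1 (pre_map k1 \<delta> c) = concat (map (\<lambda>i. c (\<delta> i)) [0..<Suc k1])"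
      unfolding flat_def pre_map_def by (intro arg_cong[where f = concat] map_cong) auto
    also have "\<dots> = concat (map (\<lambda>j. take n (drop (j*n) (flat k2 c))) (map \<delta> [0..<Suc k1]))"
    proof (simp only: map_map, intro arg_cong[where f = concat] map_cong refl)
      fix i assume "i \<in> set [0..<Suc k1]"
      then have i: "\<delta> i < Suc k2" using dk by (auto simp: less_Suc_eq_le)
      have "take n (drop (\<delta> i * n) (concat (map c [0..<Suc k2]))) = c (\<delta> i)"
        by (rule concat_block[OF lc[OF refl] i])
      then show "c (\<delta> i) = ((\<lambda>j. take n (drop (j*n) (flat k2 c))) \<circ> \<delta>) i" by (simp add: flat_def)
    qed
    also have "\<dots> = sel n bs (flat k2 c)" by (simp add: sel_formula fbs)
    finally show "flat k1 (pre_map k1 \<delta> c) = sel n bs (flat k2 c)" .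
  qed
  show "\<forall>x\<in>Pch k2 n. \<forall>z\<in>Pch k2 n. chain_le k2 cube_le x z \<longrightarrow> thin k2 x z \<longrightarrow> thin k1 (pre_map k1 \<delta> x) (pre_map k1 \<delta> z)"
  proof (intro ballI impI)
    fix x z assume x: "x \<in> Pch k2 n" and z: "z \<in> Pch k2 n" and th: "thin k2 x z"
    show "thin k1 (pre_map k1 \<delta> x) (pre_map k1 \<delta> z)"
      unfolding thin_def
    proof (intro allI impI)
      fix i assume i: "i < k1"
      have lt: "\<delta> i < \<delta> (Suc i)" "\<delta> (Suc i) \<le> k2" using sm dk i by auto
      have "cube_le (z (\<delta> i)) (x (Suc (\<delta> i)))" using th lt by (simp add: thin_def)
      moreover have "cube_le (x (Suc (\<delta> i))) (x (\<delta> (Suc i)))" using chainD(2)[OF x] lt by simp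
      ultimately have "cube_le (z (\<delta> i)) (x (\<delta> (Suc i)))" by (rule cube_le_trans)
      then show "cube_le (pre_map k1 \<delta> z i) (pre_map k1 \<delta> x (Suc i))" using i by (simp add: pre_map_def)
    qed
  qed
qed

theorem partB: "\<delta> \<in> {..k1} \<rightarrow> {..k2} \<and> (\<forall>i j. i < j \<and> j \<le> k1 \<longrightarrow> \<delta> i < \<delta> j) \<Longrightarrow>
            unique_lift C (chains k2 (cube n) cube_le) (chain_le k2 cube_le)
                          (chains k1 (cube n) cube_le) (chain_le k1 cube_le)
                          (pre_map k1 \<delta>)"
proof -
  assume a: "\<delta> \<in> {..k1} \<rightarrow> {..k2} \<and> (\<forall>i j. i < j \<and> j \<le> k1 \<longrightarrow> \<delta> i < \<delta> j)"
  note pp = pre_props[OF conjunct1[OF a] conjunct2[OF a] refl]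
  show ?thesis
    unfolding Pch_def[symmetric]
    by (rule lift_of, rule transfer[OF pp(1) pp(2) pp(3) pp(4) pp(5)])
qed

theorem mainTheorem14:
  fixes C :: sqcat
  shows "(\<forall>m n \<phi> k. sq_mor C m n \<phi> \<longrightarrow>
            unique_lift C (chains k (cube m) cube_le) (chain_le k cube_le)
                          (chains k (cube n) cube_le) (chain_le k cube_le)
                          (post_map k \<phi>))
       \<and> (\<forall>n k1 k2 \<delta>. \<delta> \<in> {..k1} \<rightarrow> {..k2} \<and> (\<forall>i j. i < j \<and> j \<le> k1 \<longrightarrow> \<delta> i < \<delta> j) \<longrightarrow>
            unique_lift C (chains k2 (cube n) cube_le) (chain_le k2 cube_le)
                          (chains k1 (cube n) cube_le) (chain_le k1 cube_le)
                          (pre_map k1 \<delta>))"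
  by (intro conjI allI impI; (rule partA partB; assumption))

end
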